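(* Let $v_1,v_2\in L_2(0,1)$ and $\alpha\in[0,2\pi)$. Let $A(v_1,v_2,\alpha)$ act in $L_2(0,1)$ by $$A(v_1,v_2,\alpha)\psi(x)=i\psi'(x)+v_1(x)\Big[\psi(0)-\tfrac{i}{2}\langle\psi,v_1\rangle\Big]+v_2(x)\Big[\psi(1)+\tfrac{i}{2}\langle\psi,v_2\rangle\Big]$$ on the domain of $\psi\in W_2^1(0,1)$ with $\psi(1)+i\langle\psi,v_2\rangle=e^{i\alpha}[\psi(0)-i\langle\psi,v_1\rangle]$. Then $A(v_1,v_2,\alpha)$ is self-adjoint in $L_2(0,1)$, and for nonreal $z$ its resolvent is the integral operator with kernel $$g_z(x,y;v_1,v_2,\alpha)=g_z(x,y;\alpha)-\frac{1}{\gamma}\sum_{j,k=1}^2\mathcal{E}_j(x,z)\gamma_{jk}\overline{\mathcal{E}_k(y,\bar z)},$$ where $E_0(x,z)=g_z(x,1;\alpha)$, $E_k(x,z)=\int_0^1g_z(x,y;\alpha)v_k(y)\,dy$ ($k=1,2$), $\mathcal{E}_1=E_1-2ie^{i\alpha}E_0$, $\mathcal{E}_2=E_2+2iE_0$, and, writing $E_j$ for $E_j(\cdot,z)$, $$\gamma_{11}(z)=-2i\Big(1+2i\beta(z)-\langle E_0,v_2\rangle+\langle v_2,E_0(\cdot,\bar z)\rangle+\tfrac{i}{2}\langle E_2,v_2\rangle\Big),$$ $$\gamma_{12}(z)=-2i\Big(2ie^{iz}\beta(z)+\langle E_0,v_1\rangle+e^{-i\alpha}\langle v_2,E_0(\cdot,\bar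 z)\rangle-\tfrac{i}{2}\langle E_2,v_1\rangle\Big),$$ $$\gamma_{21}(z)=2i\Big(-2ie^{i\alpha}\beta(z)+e^{i\alpha}\langle E_0,v_2\rangle+\langle v_1,E_0(\cdot,\bar z)\rangle+\tfrac{i}{2}\langle E_1,v_2\rangle\Big),$$ $$\gamma_{22}(z)=2i\Big(1-2ie^{i\alpha}e^{iz}\beta(z)-e^{i\alpha}\langle E_0,v_1\rangle+e^{-i\alpha}\langle v_1,E_0(\cdot,\bar z)\rangle-\tfrac{i}{2}\langle E_1,v_1\rangle\Big),$$ $\gamma=\gamma_{11}\gamma_{22}-\gamma_{12}\gamma_{21}$. The matrix $\Gamma(z)=\|\gamma_{jk}(z)\|$ satisfies $\Gamma^*(\bar z)=\Gamma(z)$ and $\overline{\gamma(\bar z)}=\gamma(z)\neq0$.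
   Context: $\langle f,g\rangle=\int_0^1 f\bar g\,dx$; $\theta$ is the Heaviside function. $g_z(x,y;\alpha)=e^{-iz(x-y)}[-i\theta(x-y)+\beta(z)]$ with $\beta(z)=\frac{ie^{-iz}}{e^{-iz}-e^{i\alpha}}$ is the resolvent kernel of the self-adjoint operator $i\,d/dx$ in $L_2(0,1)$ with domain $\{\psi\in W_2^1(0,1):\psi(1)=e^{i\alpha}\psi(0)\}$. *)

theory Defs
  imports "HOL-Analysis.Analysis"
begin

text \<open>Functions on (0,1) are represented as maps real \<Rightarrow> complex; only their
values on [0,1] matter. L_2(0,1) membership, inner product, norm, a.e. equality.\<close>

definition L2 :: "(real \<Rightarrow> complex) \<Rightarrow> bool" where
  "L2 f \<longleftrightarrow> f \<in> borel_measurable (lebesgue_on {0..1})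
           \<and> integrable (lebesgue_on {0..1}) (\<lambda>x. (cmod (f x))^2)"

definition ip :: "(real \<Rightarrow> complex) \<Rightarrow> (real \<Rightarrow> complex) \<Rightarrow> complex" where
  "ip f g = (LINT x|lebesgue_on {0..1}. f x * cnj (g x))"

definition L2norm :: "(real \<Rightarrow> complex) \<Rightarrow> real" where
  "L2norm f = sqrt (LINT x|lebesgue_on {0..1}. (cmod (f x))^2)"

definition ae_eq :: "(real \<Rightarrow> complex) \<Rightarrow> (real \<Rightarrow> complex) \<Rightarrow> bool" where
  "ae_eq f g \<longleftrightarrow> (AE x in lebesgue_on {0..1}. f x = g x)"

text \<open>psi in W_2^1(0,1) with (weak) derivative phi in L_2: psi is the absolutely
continuous function psi(x) = psi(0) + int_0^x phi on [0,1].\<close>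
definition W21 :: "(real \<Rightarrow> complex) \<Rightarrow> (real \<Rightarrow> complex) \<Rightarrow> bool" where
  "W21 psi phi \<longleftrightarrow> L2 phi \<and>
     (\<forall>x\<in>{0..1}. psi x = psi 0 + (LINT t|lebesgue_on {0..x}. phi t))"

text \<open>Self-adjointness of an operator given by its graph G (a relation on
L_2 functions, understood modulo a.e. equality): dense domain and G equals its adjoint.\<close>
definition self_adjoint_graph :: "((real \<Rightarrow> complex) \<times> (real \<Rightarrow> complex)) set \<Rightarrow> bool" where
  "self_adjoint_graph G \<longleftrightarrow>
     (\<forall>f. L2 f \<longrightarrow> (\<forall>\<epsilon>>0. \<exists>(psi, g)\<in>G. L2norm (\<lambda>x. f x - psi x) < \<epsilon>)) \<and>
     (\<forall>u w. L2 u \<and> L2 w \<longrightarrow>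
        ((\<forall>(psi, g)\<in>G. ip g u = ip psi w) \<longleftrightarrow> (\<exists>(psi, g)\<in>G. ae_eq u psi \<and> ae_eq w g)))"

definition Agraph :: "(real \<Rightarrow> complex) \<Rightarrow> (real \<Rightarrow> complex) \<Rightarrow> real
     \<Rightarrow> ((real \<Rightarrow> complex) \<times> (real \<Rightarrow> complex)) set" where
  "Agraph v1 v2 \<alpha> = {(psi, f). \<exists>phi. W21 psi phi \<and>
      psi 1 + \<i> * ip psi v2 = exp (\<i> * of_real \<alpha>) * (psi 0 - \<i> * ip psi v1) \<and>
      (\<forall>x. f x = \<i> * phi x + v1 x * (psi 0 - \<i>/2 * ip psi v1)
                             + v2 x * (psi 1 + \<i>/2 * ip psi v2))}"

definition heaviside :: "real \<Rightarrow> complex" where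
  "heaviside t = (if t > 0 then 1 else 0)"

definition beta :: "real \<Rightarrow> complex \<Rightarrow> complex" where
  "beta \<alpha> z = \<i> * exp (- \<i> * z) / (exp (- \<i> * z) - exp (\<i> * of_real \<alpha>))"

definition gfree :: "real \<Rightarrow> complex \<Rightarrow> real \<Rightarrow> real \<Rightarrow> complex" where
  "gfree \<alpha> z x y = exp (- \<i> * z * of_real (x - y)) * (- \<i> * heaviside (x - y) + beta \<alpha> z)"

definition E0 :: "real \<Rightarrow> complex \<Rightarrow> real \<Rightarrow> complex" where
  "E0 \<alpha> z x = gfree \<alpha> z x 1"

definition Ev :: "real \<Rightarrow> complex \<Rightarrow> (real \<Rightarrow> complex) \<Rightarrow> real \<Rightarrow> complex" where
  "Ev \<alpha> z v x = (LINT y|lebesgue_on {0..1}. gfree \<alpha> z x y * v y)"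

definition calE :: "real \<Rightarrow> (real \<Rightarrow> complex) \<Rightarrow> (real \<Rightarrow> complex) \<Rightarrow> nat \<Rightarrow> complex \<Rightarrow> real \<Rightarrow> complex" where
  "calE \<alpha> v1 v2 j z x =
     (if j = 1 then Ev \<alpha> z v1 x - 2 * \<i> * exp (\<i> * of_real \<alpha>) * E0 \<alpha> z x
      else Ev \<alpha> z v2 x + 2 * \<i> * E0 \<alpha> z x)"

definition gam :: "real \<Rightarrow> (real \<Rightarrow> complex) \<Rightarrow> (real \<Rightarrow> complex) \<Rightarrow> complex \<Rightarrow> nat \<Rightarrow> nat \<Rightarrow> complex" where
  "gam \<alpha> v1 v2 z j k =
    (let ea = exp (\<i> * of_real \<alpha>); eam = exp (- \<i> * of_real \<alpha>); ez = exp (\<i> * z);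
         b = beta \<alpha> z; E0z = E0 \<alpha> z; E0c = E0 \<alpha> (cnj z);
         E1 = Ev \<alpha> z v1; E2 = Ev \<alpha> z v2 in
     if j = 1 \<and> k = 1 then
       - 2 * \<i> * (1 + 2 * \<i> * b - ip E0z v2 + ip v2 E0c + \<i>/2 * ip E2 v2)
     else if j = 1 then
       - 2 * \<i> * (2 * \<i> * ez * b + ip E0z v1 + eam * ip v2 E0c - \<i>/2 * ip E2 v1)
     else if k = 1 then
       2 * \<i> * (- 2 * \<i> * ea * b + ea * ip E0z v2 + ip v1 E0c + \<i>/2 * ip E1 v2)
     else
       2 * \<i> * (1 - 2 * \<i> * ea * ez * b - ea * ip E0z v1 + eam * ip v1 E0c - \<i>/2 * ip E1 v1))"

definition gdet :: "real \<Rightarrow> (real \<Rightarrow> complex) \<Rightarrow> (real \<Rightarrow> complex) \<Rightarrow> complex \<Rightarrow> complex" where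
  "gdet \<alpha> v1 v2 z = gam \<alpha> v1 v2 z 1 1 * gam \<alpha> v1 v2 z 2 2 - gam \<alpha> v1 v2 z 1 2 * gam \<alpha> v1 v2 z 2 1"

definition res_kernel :: "real \<Rightarrow> (real \<Rightarrow> complex) \<Rightarrow> (real \<Rightarrow> complex) \<Rightarrow> complex \<Rightarrow> real \<Rightarrow> real \<Rightarrow> complex" where
  "res_kernel \<alpha> v1 v2 z x y = gfree \<alpha> z x y - (1 / gdet \<alpha> v1 v2 z) *
     (\<Sum>j\<in>{1,2}. \<Sum>k\<in>{1,2}. calE \<alpha> v1 v2 j z x * gam \<alpha> v1 v2 z j k * cnj (calE \<alpha> v1 v2 k (cnj z) y))"

end

theory Submission
  imports Defs
begin

abbreviation M01 :: "real measure" where "M01 \<equiv> lebesgue_on {0..1}"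

lemma finite_measure_lebesgue_on_ab: "finite_measure (lebesgue_on {a..b::real})"
proof (rule finite_measureI)
  have "emeasure (lebesgue_on {a..b}) (space (lebesgue_on {a..b})) = emeasure lebesgue {a..b}"
    by (simp add: emeasure_restrict_space)
  then show "emeasure (lebesgue_on {a..b}) (space (lebesgue_on {a..b})) \<noteq> \<infinity>"
    using emeasure_lborel_cbox_finite[of a b] by simp
qed

lemma integrable_bound_ab:
  fixes f :: "real \<Rightarrow> 'b::euclidean_space"
  assumes "f \<in> borel_measurable (lebesgue_on {a..b})" "integrable (lebesgue_on {a..b}) g"
    "\<And>x. x \<in> {a..b} \<Longrightarrow> norm (f x) \<le> g x"
  shows "integrable (lebesgue_on {a..b}) f"
  using measurable_bounded_by_integrable_imp_lebesgue_integrable[OF assms] by simp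

lemma cont_bounded01:
  fixes h :: "real \<Rightarrow> 'b::real_normed_vector"
  assumes "continuous_on {a..b} h"
  obtains K where "K > 0" "\<And>x. x \<in> {a..b} \<Longrightarrow> norm (h x) \<le> K"
proof -
  have "compact (h ` {a..b})" using assms compact_continuous_image by blast
  then obtain K where "K > 0" "\<forall>y\<in>h ` {a..b}. norm y \<le> K"
    using compact_imp_bounded bounded_pos by metis
  then show ?thesis using that by auto
qed

lemma sq_bound1: "(t::real) \<le> 1 + t^2"
proof -
  have "0 \<le> (t-1)^2" "0 \<le> t*t" by simp_all
  hence "2 * t \<le> 1 + t * t" by (simp add: power2_eq_square algebra_simps)
  thus ?thesis using \<open>0 \<le> t*t\<close> unfolding power2_eq_square by linarith
qed

lemma sq_bound2: "(a::real) * b \<le> a^2 + b^2"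
proof -
  have "0 \<le> (a-b)^2" "0 \<le> a*a" "0 \<le> b*b" by simp_all
  hence "2 * (a * b) \<le> a * a + b * b" by (simp add: power2_eq_square algebra_simps)
  thus ?thesis using \<open>0 \<le> a*a\<close> \<open>0 \<le> b*b\<close> unfolding power2_eq_square by linarith
qed

lemma sq_bound3: "2 * ((a::real) * b) \<le> a^2 + b^2"
proof -
  have "0 \<le> (a-b)^2" by simp
  thus ?thesis by (simp add: power2_eq_square algebra_simps)
qed

lemma borel_measurable_cnj[measurable]:
  "f \<in> borel_measurable M \<Longrightarrow> (\<lambda>x. cnj (f x :: complex)) \<in> borel_measurable M"
  by (rule borel_measurable_continuous_on[OF continuous_on_cnj[OF continuous_on_id]])

lemma L2_meas: "L2 f \<Longrightarrow> f \<in> borel_measurable M01"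
  by (simp add: L2_def)

lemma L2_sq_int: "L2 f \<Longrightarrow> integrable M01 (\<lambda>x. (cmod (f x))^2)"
  by (simp add: L2_def)

lemma L2_integrable: assumes "L2 f" shows "integrable M01 f"
proof (rule integrable_bound_ab)
  show "f \<in> borel_measurable M01" using assms by (simp add: L2_def)
  show "integrable M01 (\<lambda>x. 1 + (cmod (f x))^2)"
    using assms by (intro Bochner_Integration.integrable_add) (auto simp: L2_def intro: continuous_imp_integrable_real)
  fix x show "norm (f x) \<le> 1 + (cmod (f x))^2"
    by (rule sq_bound1)
qed

lemma L2_ip_integrable:
  assumes "L2 f" "L2 g" shows "integrable M01 (\<lambda>x. f x * cnj (g x))"
proof (rule integrable_bound_ab)
  have [measurable]: "f \<in> borel_measurable M01" "g \<in> borel_measurable M01" using assms by (auto simp: L2_def)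
  show "(\<lambda>x. f x * cnj (g x)) \<in> borel_measurable M01" by measurable
  show "integrable M01 (\<lambda>x. (cmod (f x))^2 + (cmod (g x))^2)"
    using assms by (intro Bochner_Integration.integrable_add) (auto simp: L2_def)
  fix x show "norm (f x * cnj (g x)) \<le> (cmod (f x))^2 + (cmod (g x))^2"
    by (simp add: norm_mult sq_bound2)
qed

lemma id_meas_ab[measurable]: "(\<lambda>x::real. x) \<in> borel_measurable (lebesgue_on {a..b})"
  by (rule continuous_imp_measurable_on_sets_lebesgue) (auto intro: continuous_intros)

lemma cont_meas_ab:
  fixes f :: "real \<Rightarrow> 'b::euclidean_space"
  shows "continuous_on {a..b} f \<Longrightarrow> f \<in> borel_measurable (lebesgue_on {a..b})"
  by (rule continuous_imp_measurable_on_sets_lebesgue) auto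

lemma cont_L2: assumes "continuous_on {0..1} f" shows "L2 f"
  unfolding L2_def
proof
  show "f \<in> borel_measurable M01" using assms by (rule cont_meas_ab)
  show "integrable M01 (\<lambda>x. (cmod (f x))^2)"
    by (rule continuous_imp_integrable_real) (intro continuous_intros assms)
qed

lemma integrable_mult_cont:
  fixes f h :: "real \<Rightarrow> complex"
  assumes "integrable (lebesgue_on {a..b}) f" "continuous_on {a..b} h"
  shows "integrable (lebesgue_on {a..b}) (\<lambda>x. h x * f x)"
proof -
  obtain K where K: "K > 0" "\<And>x. x \<in> {a..b} \<Longrightarrow> norm (h x) \<le> K"
    using cont_bounded01[OF assms(2)] by blast
  have [measurable]: "f \<in> borel_measurable (lebesgue_on {a..b})" "h \<in> borel_measurable (lebesgue_on {a..b})"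
    using assms cont_meas_ab by auto
  show ?thesis
  proof (rule integrable_bound_ab)
    show "(\<lambda>x. h x * f x) \<in> borel_measurable (lebesgue_on {a..b})" by measurable
    show "integrable (lebesgue_on {a..b}) (\<lambda>x. K * norm (f x))"
      using assms(1) by auto
    fix x assume "x \<in> {a..b}"
    then show "norm (h x * f x) \<le> K * norm (f x)"
      by (simp add: norm_mult K(2) mult_right_mono)
  qed
qed

lemma L2_add: assumes "L2 f" "L2 g" shows "L2 (\<lambda>x. f x + g x)"
  unfolding L2_def
proof
  have [measurable]: "f \<in> borel_measurable M01" "g \<in> borel_measurable M01" using assms by (auto simp: L2_def)
  show "(\<lambda>x. f x + g x) \<in> borel_measurable M01" by measurable
  show "integrable M01 (\<lambda>x. (cmod (f x + g x))^2)"
  proof (rule integrable_bound_ab)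
    show "(\<lambda>x. (cmod (f x + g x))^2) \<in> borel_measurable M01" by measurable
    show "integrable M01 (\<lambda>x. 2 * (cmod (f x))^2 + 2 * (cmod (g x))^2)"
      using assms by (auto simp: L2_def)
    fix x
    have "cmod (f x + g x) \<le> cmod (f x) + cmod (g x)" by (rule norm_triangle_ineq)
    then have "(cmod (f x + g x))^2 \<le> (cmod (f x) + cmod (g x))^2"
      by (simp add: power_mono)
    also have "\<dots> \<le> 2 * (cmod (f x))^2 + 2 * (cmod (g x))^2"
      using sq_bound3[of "cmod (f x)" "cmod (g x)"] by (simp add: power2_eq_square algebra_simps)
    finally show "norm ((cmod (f x + g x))^2) \<le> 2 * (cmod (f x))^2 + 2 * (cmod (g x))^2"
      by simp
  qed
qed

lemma L2_mult_cont: assumes "L2 f" "continuous_on {0..1} h" shows "L2 (\<lambda>x. h x * f x)"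
  unfolding L2_def
proof
  obtain K where K: "K > 0" "\<And>x. x \<in> {0..1} \<Longrightarrow> norm (h x) \<le> K"
    using cont_bounded01[OF assms(2)] by blast
  have [measurable]: "f \<in> borel_measurable M01" "h \<in> borel_measurable M01"
    using assms cont_meas_ab by (auto simp: L2_def)
  show "(\<lambda>x. h x * f x) \<in> borel_measurable M01" by measurable
  show "integrable M01 (\<lambda>x. (cmod (h x * f x))^2)"
  proof (rule integrable_bound_ab)
    show "(\<lambda>x. (cmod (h x * f x))^2) \<in> borel_measurable M01" by measurable
    show "integrable M01 (\<lambda>x. K^2 * (cmod (f x))^2)"
      using assms by (auto simp: L2_def)
    fix x :: real assume x: "x \<in> {0..1}"
    have "(cmod (h x * f x))^2 = (cmod (h x))^2 * (cmod (f x))^2" by (simp add: norm_mult power_mult_distrib)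
    also have "\<dots> \<le> K^2 * (cmod (f x))^2"
      by (intro mult_right_mono power_mono K(2) x) auto
    finally show "norm ((cmod (h x * f x))^2) \<le> K^2 * (cmod (f x))^2" by simp
  qed
qed

lemma L2_cmult: "L2 f \<Longrightarrow> L2 (\<lambda>x. c * f x)"
  using L2_mult_cont[of f "\<lambda>_. c"] by simp

lemma L2_diff: "L2 f \<Longrightarrow> L2 g \<Longrightarrow> L2 (\<lambda>x. f x - g x)"
  using L2_add[of f "\<lambda>x. (-1) * g x"] L2_cmult[of g "-1"] by simp

lemma L2_cnj: assumes "L2 f" shows "L2 (\<lambda>x. cnj (f x))"
  using assms unfolding L2_def by auto

lemma L2_zero: "L2 (\<lambda>x. 0)"
  by (rule cont_L2) simp

lemma L2_cong: assumes "L2 f" "\<And>x. x \<in> {0..1} \<Longrightarrow> g x = f x" shows "L2 g"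
proof -
  have "g \<in> borel_measurable M01"
  proof -
    have "g \<in> borel_measurable M01 \<longleftrightarrow> f \<in> borel_measurable M01"
      by (rule measurable_cong) (simp add: assms(2))
    then show ?thesis using assms(1) by (simp add: L2_def)
  qed
  moreover have "integrable M01 (\<lambda>x. (cmod (g x))^2)"
  proof -
    have "integrable M01 (\<lambda>x. (cmod (g x))^2) \<longleftrightarrow> integrable M01 (\<lambda>x. (cmod (f x))^2)"
      by (rule Bochner_Integration.integrable_cong) (simp_all add: assms(2))
    then show ?thesis using assms(1) by (simp add: L2_def)
  qed
  ultimately show ?thesis by (simp add: L2_def)
qed

lemma ip_cnj: "ip g f = cnj (ip f g)"
  unfolding ip_def by (subst Bochner_Integration.integral_cnj[symmetric]) (simp add: mult.commute)

lemma ip_add_left: "L2 f1 \<Longrightarrow> L2 f2 \<Longrightarrow> L2 g \<Longrightarrow> ip (\<lambda>x. f1 x + f2 x) g = ip f1 g + ip f2 g"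
  unfolding ip_def by (simp add: distrib_right L2_ip_integrable)

lemma ip_cmult_left: "ip (\<lambda>x. c * f x) g = c * ip f g"
  unfolding ip_def by (simp add: mult.assoc)

lemma ip_cmult_right: "ip f (\<lambda>x. c * g x) = cnj c * ip f g"
  unfolding ip_def by (simp add: mult.assoc mult.left_commute)

lemma ip_add_right: "L2 f \<Longrightarrow> L2 g1 \<Longrightarrow> L2 g2 \<Longrightarrow> ip f (\<lambda>x. g1 x + g2 x) = ip f g1 + ip f g2"
  unfolding ip_def by (simp add: distrib_left L2_ip_integrable)

lemma ip_cong_left: "(\<And>x. x \<in> {0..1} \<Longrightarrow> f x = f' x) \<Longrightarrow> ip f g = ip f' g"
  unfolding ip_def by (rule Bochner_Integration.integral_cong) auto

lemma ip_cong_right: "(\<And>x. x \<in> {0..1} \<Longrightarrow> g x = g' x) \<Longrightarrow> ip f g = ip f g'"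
  unfolding ip_def by (rule Bochner_Integration.integral_cong) auto

lemma ip_ae_left: assumes "L2 f" "L2 f'" "L2 g" "ae_eq f f'" shows "ip f g = ip f' g"
  unfolding ip_def
proof (rule integral_cong_AE)
  show "(\<lambda>x. f x * cnj (g x)) \<in> borel_measurable M01" "(\<lambda>x. f' x * cnj (g x)) \<in> borel_measurable M01"
    using assms by (auto intro: borel_measurable_integrable L2_ip_integrable)
  show "AE x in M01. f x * cnj (g x) = f' x * cnj (g x)"
    using assms(4) unfolding ae_eq_def by auto
qed

lemma ip_ae_right: assumes "L2 f" "L2 g" "L2 g'" "ae_eq g g'" shows "ip f g = ip f g'"
  using ip_ae_left[OF assms(2,3,1,4)] ip_cnj by metis

lemma ip_self_real: "ip f f = of_real (LINT x|M01. (cmod (f x))^2)"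
proof -
  have "ip f f = (LINT x|M01. of_real ((cmod (f x))^2))"
    unfolding ip_def by (rule Bochner_Integration.integral_cong) (simp_all add: complex_norm_square[symmetric] del: of_real_power)
  also have "\<dots> = of_real (LINT x|M01. (cmod (f x))^2)" by (rule integral_complex_of_real)
  finally show ?thesis .
qed


lemma ind_restrict:
  fixes h :: "real \<Rightarrow> complex"
  assumes "x \<in> {a..b::real}"
  shows "(LINT t|lebesgue_on {a..x}. h t) = (LINT t|lebesgue_on {a..b}. (if t \<in> {a..x} then h t else 0))"
proof -
  have e: "{a..x} \<inter> {a..b} = {a..x}" using assms by auto
  have "(LINT t|lebesgue_on {a..b}. (if t \<in> {a..x} then h t else 0)) = (LINT t|lebesgue_on ({a..x} \<inter> {a..b}). h t)"
    by (rule Lebesgue_Measure.integral_restrict_Int) auto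
  then show ?thesis unfolding e by simp
qed

lemma AE_ne_point: "AE t in lebesgue_on {a..b::real}. t \<noteq> s"
proof -
  have "{s} \<in> null_sets lebesgue"
    using negligible_iff_null_sets[of "{s}"] by auto
  then have "AE t in lebesgue. t \<notin> {s}" by (rule AE_not_in)
  then have "AE t in lebesgue. t \<in> {a..b} \<longrightarrow> t \<noteq> s" by auto
  then show ?thesis
    by (subst AE_restrict_space_iff) auto
qed

lemma integral_point0: "(LINT t|lebesgue_on {a..a::real}. (h t :: complex)) = 0"
proof (rule integral_eq_zero_AE)
  have "AE t in lebesgue_on {a..a}. t \<noteq> a" by (rule AE_ne_point)
  then show "AE t in lebesgue_on {a..a}. h t = 0"
    by (rule AE_mp) (rule AE_I2, auto)
qed

lemma L2_integrable_sub: "L2 f \<Longrightarrow> x \<in> {0..1} \<Longrightarrow> integrable (lebesgue_on {0..x}) f"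
  using L2_integrable integrable_subinterval[of 0 1 f 0 x] by auto

lemma indef_cont:
  fixes h :: "real \<Rightarrow> complex"
  assumes "integrable M01 h"
  shows "continuous_on {0..1} (\<lambda>x. LINT t|lebesgue_on {0..x}. h t)"
  using indefinite_integral_continuous_real[OF assms] by simp

lemma W21D: "W21 psi phi \<Longrightarrow> x \<in> {0..1} \<Longrightarrow> psi x = psi 0 + (LINT t|lebesgue_on {0..x}. phi t)"
  unfolding W21_def by blast

lemma W21_L2d: "W21 psi phi \<Longrightarrow> L2 phi"
  unfolding W21_def by blast

lemma W21I: "L2 phi \<Longrightarrow> (\<And>x. x \<in> {0..1} \<Longrightarrow> psi x = psi 0 + (LINT t|lebesgue_on {0..x}. phi t)) \<Longrightarrow> W21 psi phi"
  unfolding W21_def by blast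

lemma W21_cont: assumes "W21 psi phi" shows "continuous_on {0..1} psi"
proof -
  have "continuous_on {0..1} (\<lambda>x. psi 0 + (LINT t|lebesgue_on {0..x}. phi t))"
    using assms by (intro continuous_intros indef_cont L2_integrable W21_L2d)
  moreover have "continuous_on {0..1} psi = continuous_on {0..1} (\<lambda>x. psi 0 + (LINT t|lebesgue_on {0..x}. phi t))"
    by (rule continuous_on_cong[OF refl]) (rule W21D[OF assms])
  ultimately show ?thesis by blast
qed

lemma W21_L2: "W21 psi phi \<Longrightarrow> L2 psi"
  by (rule cont_L2, rule W21_cont)

lemma W21_cong:
  assumes "W21 psi phi" "\<And>x. x \<in> {0..1} \<Longrightarrow> psi' x = psi x" "\<And>x. x \<in> {0..1} \<Longrightarrow> phi' x = phi x"
  shows "W21 psi' phi'"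
proof (rule W21I)
  show "L2 phi'" using W21_L2d[OF assms(1)] L2_cong[of phi phi'] assms(3) by blast
  fix x :: real assume x: "x \<in> {0..1}"
  have "(LINT t|lebesgue_on {0..x}. phi' t) = (LINT t|lebesgue_on {0..x}. phi t)"
    using x by (intro Bochner_Integration.integral_cong) (auto simp: assms(3))
  moreover have "psi' 0 = psi 0" "psi' x = psi x" using assms(2) x by auto
  ultimately show "psi' x = psi' 0 + (LINT t|lebesgue_on {0..x}. phi' t)"
    using W21D[OF assms(1) x] by simp
qed

lemma W21_add:
  assumes "W21 F a" "W21 G b"
  shows "W21 (\<lambda>x. F x + G x) (\<lambda>x. a x + b x)"
proof (rule W21I)
  show "L2 (\<lambda>x. a x + b x)" using assms by (intro L2_add W21_L2d)
  fix x :: real assume x: "x \<in> {0..1}"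
  have "(LINT t|lebesgue_on {0..x}. a t + b t) = (LINT t|lebesgue_on {0..x}. a t) + (LINT t|lebesgue_on {0..x}. b t)"
    using assms x by (intro Bochner_Integration.integral_add L2_integrable_sub W21_L2d)
  then show "F x + G x = F 0 + G 0 + (LINT t|lebesgue_on {0..x}. a t + b t)"
    using W21D[OF assms(1) x] W21D[OF assms(2) x] by simp
qed

lemma W21_cmult:
  assumes "W21 F a"
  shows "W21 (\<lambda>x. c * F x) (\<lambda>x. c * a x)"
proof (rule W21I)
  show "L2 (\<lambda>x. c * a x)" using assms by (intro L2_cmult W21_L2d)
  fix x :: real assume x: "x \<in> {0..1}"
  show "c * F x = c * F 0 + (LINT t|lebesgue_on {0..x}. c * a t)"
    using W21D[OF assms x] by (simp add: distrib_left)
qed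

lemma W21_const: "W21 (\<lambda>x. c) (\<lambda>x. 0)"
  by (rule W21I) (simp_all add: L2_zero)

lemma W21_ind: assumes "L2 h" shows "W21 (\<lambda>x. LINT t|lebesgue_on {0..x}. h t) h"
  using integral_point0[of 0 h] by (intro W21I) (simp_all add: assms)

lemma W21_C1:
  assumes der: "\<And>x. x \<in> {0..1} \<Longrightarrow> (F has_vector_derivative F' x) (at x within {0..1})"
    and cont: "continuous_on {0..1} F'"
  shows "W21 F F'"
proof (rule W21I)
  show "L2 F'" using cont by (rule cont_L2)
  fix x :: real assume x: "x \<in> {0..1}"
  have "(F' has_integral (F x - F 0)) {0..x}"
    using x by (intro fundamental_theorem_of_calculus)
      (auto intro: has_vector_derivative_within_subset[OF der])
  moreover have "integrable (lebesgue_on {0..x}) F'"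
    using x by (intro continuous_imp_integrable_real continuous_on_subset[OF cont]) auto
  ultimately have "(LINT t|lebesgue_on {0..x}. F' t) = F x - F 0"
    by (simp add: lebesgue_integral_eq_integral integral_unique)
  then show "F x = F 0 + (LINT t|lebesgue_on {0..x}. F' t)" by simp
qed


lemma sigma_finite_lebesgue_on_ab: "sigma_finite_measure (lebesgue_on {a..b::real})"
  using finite_measure_lebesgue_on_ab[of a b] unfolding finite_measure_def by blast

lemma integrable_if_bound:
  fixes f :: "'a \<Rightarrow> complex"
  assumes "integrable M f" "(\<lambda>t. if Q t then f t else 0) \<in> borel_measurable M"
  shows "integrable M (\<lambda>t. if Q t then f t else 0)"
  by (rule Bochner_Integration.integrable_bound[OF assms(1) assms(2)]) auto

lemma ibp_core:
  fixes a b :: "real \<Rightarrow> complex"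
  assumes c: "0 \<le> c" and ia: "integrable (lebesgue_on {0..c}) a" and ib: "integrable (lebesgue_on {0..c}) b"
  shows "(LINT s|lebesgue_on {0..c}. a s * (LINT t|lebesgue_on {0..s}. b t) + (LINT t|lebesgue_on {0..s}. a t) * b s)
       = (LINT t|lebesgue_on {0..c}. a t) * (LINT t|lebesgue_on {0..c}. b t)"
proof -
  define N where "N = lebesgue_on {0..c}"
  define A where "A s = (LINT t|lebesgue_on {0..s}. a t)" for s
  define B where "B s = (LINT t|lebesgue_on {0..s}. b t)" for s
  define P where "P s t = (if s \<le> t then a s * b t else 0)" for s t
  interpret N: sigma_finite_measure N unfolding N_def by (rule sigma_finite_lebesgue_on_ab)
  interpret NN: pair_sigma_finite N N by unfold_locales
  have ia': "integrable N a" and ib': "integrable N b" using ia ib by (auto simp: N_def)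
  have [measurable]: "a \<in> borel_measurable N" "b \<in> borel_measurable N" using ia' ib' by auto
  have [measurable]: "(\<lambda>x::real. x) \<in> borel_measurable N" unfolding N_def by (rule id_meas_ab)
  have spN: "space N = {0..c}" by (simp add: N_def)
  have contA: "continuous_on {0..c} A" unfolding A_def by (rule indefinite_integral_continuous_real[OF ia])
  have contB: "continuous_on {0..c} B" unfolding B_def by (rule indefinite_integral_continuous_real[OF ib])
  have iBa: "integrable N (\<lambda>s. B s * a s)" unfolding N_def by (rule integrable_mult_cont[OF ia contB])
  have iAb: "integrable N (\<lambda>s. A s * b s)" unfolding N_def by (rule integrable_mult_cont[OF ib contA])
  have s1: "A t * b t = (LINT s|N. P s t)" if t: "t \<in> {0..c}" for t
  proof -
    have "A t = (LINT s|N. (if s \<in> {0..t} then a s else 0))" unfolding A_def N_def by (rule ind_restrict[OF t])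
    then have "A t * b t = (LINT s|N. (if s \<in> {0..t} then a s else 0) * b t)" by simp
    also have "\<dots> = (LINT s|N. P s t)"
      by (rule Bochner_Integration.integral_cong) (auto simp: P_def spN)
    finally show ?thesis .
  qed
  have s2: "(LINT t|N. P s t) = a s * (B c - B s)" if s: "s \<in> {0..c}" for s
  proof -
    have e1: "(LINT t|N. P s t) = (LINT t|N. a s * (if s \<le> t then b t else 0))"
      by (rule Bochner_Integration.integral_cong) (auto simp: P_def)
    have i1: "integrable N (\<lambda>t. if s \<le> t then b t else 0)"
      by (rule integrable_if_bound[OF ib']) measurable
    have i2: "integrable N (\<lambda>t. if t \<in> {0..s} then b t else 0)"
      by (rule integrable_if_bound[OF ib']) measurable
    have "(LINT t|N. (if s \<le> t then b t else 0)) + (LINT t|N. (if t \<in> {0..s} then b t else 0))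
        = (LINT t|N. (if s \<le> t then b t else 0) + (if t \<in> {0..s} then b t else 0))"
      by (rule Bochner_Integration.integral_add[symmetric, OF i1 i2])
    also have "\<dots> = (LINT t|N. b t)"
    proof (rule integral_cong_AE)
      show "(\<lambda>t. (if s \<le> t then b t else 0) + (if t \<in> {0..s} then b t else 0)) \<in> borel_measurable N"
        by measurable
      show "b \<in> borel_measurable N" by measurable
      have "AE t in N. t \<noteq> s" unfolding N_def by (rule AE_ne_point)
      then show "AE t in N. (if s \<le> t then b t else 0) + (if t \<in> {0..s} then b t else 0) = b t"
        by (rule AE_mp) (rule AE_I2, auto simp: spN)
    qed
    finally have e2: "(LINT t|N. (if s \<le> t then b t else 0)) = (LINT t|N. b t) - (LINT t|N. (if t \<in> {0..s} then b t else 0))"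
      by (simp add: algebra_simps)
    have e3: "(LINT t|N. (if t \<in> {0..s} then b t else 0)) = B s"
      unfolding B_def N_def by (rule ind_restrict[symmetric, OF s])
    have e4: "(LINT t|N. b t) = B c" unfolding B_def N_def ..
    show ?thesis using e1 e2 e3 e4 by simp
  qed
  have iprod: "integrable (N \<Otimes>\<^sub>M N) (\<lambda>p. a (fst p) * b (snd p))"
  proof (rule NN.Fubini_integrable)
    show "(\<lambda>p. a (fst p) * b (snd p)) \<in> borel_measurable (N \<Otimes>\<^sub>M N)" by measurable
    show "integrable N (\<lambda>x. LINT y|N. norm (a (fst (x, y)) * b (snd (x, y))))"
      by (simp add: norm_mult ia' integrable_norm)
    show "AE x in N. integrable N (\<lambda>y. a (fst (x, y)) * b (snd (x, y)))"
      by (simp add: ib')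
  qed
  have Peq: "case_prod P = (\<lambda>p. if fst p \<le> snd p then a (fst p) * b (snd p) else 0)"
    by (auto simp: P_def fun_eq_iff)
  have iP: "integrable (N \<Otimes>\<^sub>M N) (case_prod P)"
  proof (rule Bochner_Integration.integrable_bound[OF iprod])
    show "case_prod P \<in> borel_measurable (N \<Otimes>\<^sub>M N)" unfolding Peq by measurable
    show "AE x in N \<Otimes>\<^sub>M N. norm (case_prod P x) \<le> norm (a (fst x) * b (snd x))"
      by (auto simp: Peq)
  qed
  have "(LINT t|N. A t * b t) = (LINT t|N. (LINT s|N. P s t))"
    by (rule Bochner_Integration.integral_cong) (auto simp: spN s1)
  also have "\<dots> = (LINT s|N. (LINT t|N. P s t))"
    by (rule NN.Fubini_integral[OF iP])
  also have "\<dots> = (LINT s|N. a s * B c - B s * a s)"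
    by (rule Bochner_Integration.integral_cong) (auto simp: spN s2 algebra_simps)
  also have "\<dots> = A c * B c - (LINT s|N. B s * a s)"
    using ia' iBa by (simp add: A_def N_def mult.commute)
  finally have fin: "(LINT t|N. A t * b t) = A c * B c - (LINT s|N. B s * a s)" .
  have "(LINT s|N. a s * B s + A s * b s) = (LINT s|N. B s * a s) + (LINT s|N. A s * b s)"
    using iBa iAb by (simp add: mult.commute)
  also have "\<dots> = A c * B c" using fin by simp
  finally show ?thesis unfolding A_def B_def N_def .
qed


lemma L2_mult_cont': "L2 f \<Longrightarrow> continuous_on {0..1} h \<Longrightarrow> L2 (\<lambda>x. f x * h x)"
  using L2_mult_cont[of f h] by (simp add: mult.commute)

lemma W21_mult:
  assumes F: "W21 F a" and G: "W21 G b"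
  shows "W21 (\<lambda>x. F x * G x) (\<lambda>x. a x * G x + F x * b x)"
proof (rule W21I)
  show "L2 (\<lambda>x. a x * G x + F x * b x)"
    using F G by (intro L2_add L2_mult_cont' L2_mult_cont W21_L2d W21_cont)
  fix x :: real assume x: "x \<in> {0..1}"
  have ia: "integrable (lebesgue_on {0..x}) a" and ib: "integrable (lebesgue_on {0..x}) b"
    using F G x by (auto intro: L2_integrable_sub W21_L2d)
  define A where "A s = (LINT t|lebesgue_on {0..s}. a t)" for s
  define B where "B s = (LINT t|lebesgue_on {0..s}. b t)" for s
  have core: "(LINT s|lebesgue_on {0..x}. a s * B s + A s * b s) = A x * B x"
    unfolding A_def B_def using x by (intro ibp_core ia ib) auto
  have contA: "continuous_on {0..x} A" unfolding A_def by (rule indefinite_integral_continuous_real[OF ia])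
  have contB: "continuous_on {0..x} B" unfolding B_def by (rule indefinite_integral_continuous_real[OF ib])
  have iBa: "integrable (lebesgue_on {0..x}) (\<lambda>s. B s * a s)" by (rule integrable_mult_cont[OF ia contB])
  have iAb: "integrable (lebesgue_on {0..x}) (\<lambda>s. A s * b s)" by (rule integrable_mult_cont[OF ib contA])
  have "(LINT s|lebesgue_on {0..x}. a s * G s + F s * b s)
      = (LINT s|lebesgue_on {0..x}. (G 0 * a s + F 0 * b s) + (B s * a s + A s * b s))"
  proof (rule Bochner_Integration.integral_cong[OF refl])
    fix s assume "s \<in> space (lebesgue_on {0..x})"
    then have s: "s \<in> {0..1}" using x by auto
    show "a s * G s + F s * b s = (G 0 * a s + F 0 * b s) + (B s * a s + A s * b s)"
      using W21D[OF F s] W21D[OF G s] unfolding A_def B_def by (simp add: algebra_simps)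
  qed
  also have "\<dots> = G 0 * A x + F 0 * B x + A x * B x"
    using ia ib iBa iAb core by (simp add: A_def B_def mult.commute)
  finally have "(LINT s|lebesgue_on {0..x}. a s * G s + F s * b s) = G 0 * A x + F 0 * B x + A x * B x" .
  then show "F x * G x = F 0 * G 0 + (LINT t|lebesgue_on {0..x}. a t * G t + F t * b t)"
    using W21D[OF F x] W21D[OF G x] unfolding A_def B_def by (simp add: algebra_simps)
qed

lemma W21_cnj: assumes "W21 F a" shows "W21 (\<lambda>x. cnj (F x)) (\<lambda>x. cnj (a x))"
proof (rule W21I)
  show "L2 (\<lambda>x. cnj (a x))" using assms by (intro L2_cnj W21_L2d)
  fix x :: real assume x: "x \<in> {0..1}"
  show "cnj (F x) = cnj (F 0) + (LINT t|lebesgue_on {0..x}. cnj (a t))"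
    using W21D[OF assms x] by simp
qed

lemma ibp:
  assumes F: "W21 F a" and G: "W21 G b"
  shows "(LINT x|M01. a x * cnj (G x) + F x * cnj (b x)) = F 1 * cnj (G 1) - F 0 * cnj (G 0)"
  using W21D[OF W21_mult[OF F W21_cnj[OF G]], of 1] by simp


lemma ip_zero_ae:
  assumes "L2 r" "ip r r = 0" shows "ae_eq r (\<lambda>x. 0)"
proof -
  have "(LINT x|M01. (cmod (r x))^2) = 0" using assms(2) ip_self_real[of r] by simp
  then have "AE x in M01. (cmod (r x))^2 = 0"
    using integral_nonneg_eq_0_iff_AE[of M01 "\<lambda>x. (cmod (r x))^2"] assms(1) by (simp add: L2_def)
  then show ?thesis unfolding ae_eq_def by simp
qed

lemma ae_eq_trans: "ae_eq f g \<Longrightarrow> ae_eq g h \<Longrightarrow> ae_eq f h"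
  unfolding ae_eq_def by (rule AE_mp) (rule AE_mp, assumption, auto)

lemma ae_eq_sym: "ae_eq f g \<Longrightarrow> ae_eq g f"
  unfolding ae_eq_def by auto

lemma ip_diff_right: "L2 f \<Longrightarrow> L2 g1 \<Longrightarrow> L2 g2 \<Longrightarrow> ip f (\<lambda>x. g1 x - g2 x) = ip f g1 - ip f g2"
  unfolding ip_def by (simp add: right_diff_distrib L2_ip_integrable)

lemma ip_diff_left: "L2 f1 \<Longrightarrow> L2 f2 \<Longrightarrow> L2 g \<Longrightarrow> ip (\<lambda>x. f1 x - f2 x) g = ip f1 g - ip f2 g"
  unfolding ip_def by (simp add: left_diff_distrib L2_ip_integrable)

lemma abstract_self_adjoint:
  fixes G :: "((real \<Rightarrow> complex) \<times> (real \<Rightarrow> complex)) set" and z :: complex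
  assumes sym: "\<And>psi g chi h. (psi, g) \<in> G \<Longrightarrow> (chi, h) \<in> G \<Longrightarrow> ip g chi = ip psi h"
    and l2: "\<And>psi g. (psi, g) \<in> G \<Longrightarrow> L2 psi \<and> L2 g"
    and ranz: "\<And>f. L2 f \<Longrightarrow> \<exists>(psi, g)\<in>G. ae_eq g (\<lambda>x. z * psi x + f x)"
    and ranc: "\<And>f. L2 f \<Longrightarrow> \<exists>(psi, g)\<in>G. ae_eq g (\<lambda>x. cnj z * psi x + f x)"
    and dens: "\<And>f. L2 f \<Longrightarrow> (\<forall>\<epsilon>>0. \<exists>(psi, g)\<in>G. L2norm (\<lambda>x. f x - psi x) < \<epsilon>)"
  shows "self_adjoint_graph G"
  unfolding self_adjoint_graph_def
proof (intro conjI)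
  show "\<forall>f. L2 f \<longrightarrow> (\<forall>\<epsilon>>0. \<exists>(psi, g)\<in>G. L2norm (\<lambda>x. f x - psi x) < \<epsilon>)"
    using dens by blast
next
  show "\<forall>u w. L2 u \<and> L2 w \<longrightarrow>
        ((\<forall>(psi, g)\<in>G. ip g u = ip psi w) \<longleftrightarrow> (\<exists>(psi, g)\<in>G. ae_eq u psi \<and> ae_eq w g))"
  proof (intro allI impI)
  fix u w :: "real \<Rightarrow> complex" assume uw: "L2 u \<and> L2 w"
  then have u: "L2 u" and w: "L2 w" by auto
  show "(\<forall>(psi, g)\<in>G. ip g u = ip psi w) \<longleftrightarrow> (\<exists>(psi, g)\<in>G. ae_eq u psi \<and> ae_eq w g)"
  proof
    assume adj: "\<forall>(psi, g)\<in>G. ip g u = ip psi w"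
    have L2f: "L2 (\<lambda>x. w x - cnj z * u x)" using u w by (intro L2_diff L2_cmult)
    obtain chi h where chG: "(chi, h) \<in> G" and chae: "ae_eq h (\<lambda>x. cnj z * chi x + (w x - cnj z * u x))"
      using ranc[OF L2f] by blast
    have chi: "L2 chi" and h: "L2 h" using l2[OF chG] by auto
    define r where "r x = u x - chi x" for x
    have r: "L2 r" unfolding r_def using u chi by (rule L2_diff)
    have key: "ip g r = z * ip psi r" if pg: "(psi, g) \<in> G" for psi g
    proof -
      have psi: "L2 psi" and g: "L2 g" using l2[OF pg] by auto
      have "ip psi h = ip psi (\<lambda>x. cnj z * chi x + (w x - cnj z * u x))"
        using psi h chae L2_add[OF L2_cmult[OF chi] L2f] by (intro ip_ae_right) auto
      also have "\<dots> = z * ip psi chi + (ip psi w - z * ip psi u)"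
        using psi chi u w by (simp add: ip_add_right ip_diff_right ip_cmult_right L2_cmult L2_diff)
      finally have ph: "ip psi h = z * ip psi chi + (ip psi w - z * ip psi u)" .
      have "ip g r = ip g u - ip g chi" unfolding r_def using g u chi by (rule ip_diff_right)
      also have "ip g u = ip psi w" using adj pg by auto
      also have "ip g chi = ip psi h" by (rule sym[OF pg chG])
      finally have "ip g r = z * ip psi u - z * ip psi chi" using ph by simp
      also have "\<dots> = z * ip psi r" unfolding r_def using psi u chi by (simp add: ip_diff_right right_diff_distrib)
      finally show ?thesis .
    qed
    obtain psi g where pg: "(psi, g) \<in> G" and pgae: "ae_eq g (\<lambda>x. z * psi x + r x)"
      using ranz[OF r] by blast
    have psi: "L2 psi" and g: "L2 g" using l2[OF pg] by auto
    have "ip g r = ip (\<lambda>x. z * psi x + r x) r"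
      using g psi r pgae by (intro ip_ae_left) (auto intro: L2_add L2_cmult)
    also have "\<dots> = z * ip psi r + ip r r"
      using psi r by (simp add: ip_add_left ip_cmult_left L2_cmult)
    finally have "ip r r = 0" using key[OF pg] by simp
    then have r0: "ae_eq r (\<lambda>x. 0)" by (rule ip_zero_ae[OF r])
    have "ae_eq u chi" using r0 unfolding ae_eq_def r_def by auto
    moreover have "ae_eq w h"
    proof -
      have "ae_eq w (\<lambda>x. cnj z * chi x + (w x - cnj z * u x))"
        using r0 unfolding ae_eq_def r_def by (rule AE_mp) (auto simp: algebra_simps)
      then show ?thesis using ae_eq_sym[OF chae] by (rule ae_eq_trans)
    qed
    ultimately show "\<exists>(psi, g)\<in>G. ae_eq u psi \<and> ae_eq w g" using chG by blast
  next
    assume "\<exists>(psi, g)\<in>G. ae_eq u psi \<and> ae_eq w g"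
    then obtain psi g where pg: "(psi, g) \<in> G" and ae: "ae_eq u psi" "ae_eq w g" by blast
    have psi: "L2 psi" and g: "L2 g" using l2[OF pg] by auto
    show "\<forall>(chi, h)\<in>G. ip h u = ip chi w"
    proof (clarify)
      fix chi h assume ch: "(chi, h) \<in> G"
      have chi: "L2 chi" and h: "L2 h" using l2[OF ch] by auto
      have "ip h u = ip h psi" using h u psi ae(1) by (rule ip_ae_right)
      also have "\<dots> = ip chi g" by (rule sym[OF ch pg])
      also have "\<dots> = ip chi w" using chi g w ae_eq_sym[OF ae(2)] by (rule ip_ae_right)
      finally show "ip h u = ip chi w" .
    qed
  qed
  qed
qed


lemma AgraphE:
  assumes "(psi, g) \<in> Agraph v1 v2 \<alpha>"
  obtains phi where "W21 psi phi"
    "psi 1 + \<i> * ip psi v2 = exp (\<i> * of_real \<alpha>) * (psi 0 - \<i> * ip psi v1)"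
    "g = (\<lambda>x. \<i> * phi x + v1 x * (psi 0 - \<i>/2 * ip psi v1) + v2 x * (psi 1 + \<i>/2 * ip psi v2))"
  using assms unfolding Agraph_def by auto

lemma AgraphI:
  assumes "W21 psi phi"
    "psi 1 + \<i> * ip psi v2 = exp (\<i> * of_real \<alpha>) * (psi 0 - \<i> * ip psi v1)"
    "\<And>x. g x = \<i> * phi x + v1 x * (psi 0 - \<i>/2 * ip psi v1) + v2 x * (psi 1 + \<i>/2 * ip psi v2)"
  shows "(psi, g) \<in> Agraph v1 v2 \<alpha>"
  using assms unfolding Agraph_def by auto

lemma Agraph_L2:
  assumes v1: "L2 v1" and v2: "L2 v2" and pg: "(psi, g) \<in> Agraph v1 v2 \<alpha>"
  shows "L2 psi \<and> L2 g"
proof -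
  obtain phi where W: "W21 psi phi" and g: "g = (\<lambda>x. \<i> * phi x + v1 x * (psi 0 - \<i>/2 * ip psi v1) + v2 x * (psi 1 + \<i>/2 * ip psi v2))"
    using AgraphE[OF pg] by blast
  have "L2 g" unfolding g using W v1 v2
    by (intro L2_add L2_cmult L2_mult_cont' W21_L2d[OF W] v1 v2) auto
  then show ?thesis using W21_L2[OF W] by simp
qed

lemma Agraph_sym:
  assumes v1: "L2 v1" and v2: "L2 v2" and pg: "(psi, g) \<in> Agraph v1 v2 \<alpha>" and ch: "(chi, h) \<in> Agraph v1 v2 \<alpha>"
  shows "ip g chi = ip psi h"
proof -
  define E where "E = exp (\<i> * of_real \<alpha>)"
  have hE: "cnj E * E = 1" unfolding E_def by (simp add: exp_cnj exp_add[symmetric])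
  obtain phi where W1: "W21 psi phi" and bc1: "psi 1 + \<i> * ip psi v2 = E * (psi 0 - \<i> * ip psi v1)"
    and g: "g = (\<lambda>x. \<i> * phi x + v1 x * (psi 0 - \<i>/2 * ip psi v1) + v2 x * (psi 1 + \<i>/2 * ip psi v2))"
    using AgraphE[OF pg] unfolding E_def by blast
  obtain phi2 where W2: "W21 chi phi2" and bc2: "chi 1 + \<i> * ip chi v2 = E * (chi 0 - \<i> * ip chi v1)"
    and h: "h = (\<lambda>x. \<i> * phi2 x + v1 x * (chi 0 - \<i>/2 * ip chi v1) + v2 x * (chi 1 + \<i>/2 * ip chi v2))"
    using AgraphE[OF ch] unfolding E_def by blast
  have psi: "L2 psi" "L2 phi" using W1 by (auto intro: W21_L2 W21_L2d)
  have chi: "L2 chi" "L2 phi2" using W2 by (auto intro: W21_L2 W21_L2d)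
  define a where "a = ip psi v1"
  define b where "b = ip psi v2"
  define c where "c = ip chi v1"
  define d where "d = ip chi v2"
  define X1 where "X1 = psi 0 - \<i>/2 * a"
  define Y1 where "Y1 = psi 1 + \<i>/2 * b"
  define X2 where "X2 = chi 0 - \<i>/2 * c"
  define Y2 where "Y2 = chi 1 + \<i>/2 * d"
  have g': "g = (\<lambda>x. (\<i> * phi x + X1 * v1 x) + Y1 * v2 x)"
    unfolding g X1_def Y1_def a_def b_def by (simp add: mult.commute)
  have h': "h = (\<lambda>x. (\<i> * phi2 x + X2 * v1 x) + Y2 * v2 x)"
    unfolding h X2_def Y2_def c_def d_def by (simp add: mult.commute)
  have lhs: "ip g chi = \<i> * ip phi chi + X1 * cnj c + Y1 * cnj d"
    unfolding g' c_def d_def using psi chi v1 v2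
    by (simp add: ip_add_left ip_cmult_left L2_add L2_cmult ip_cnj[of v1 chi] ip_cnj[of v2 chi])
  have rhs: "ip psi h = - \<i> * ip psi phi2 + cnj X2 * a + cnj Y2 * b"
    unfolding h' a_def b_def using psi chi v1 v2
    by (simp add: ip_add_right ip_cmult_right L2_add L2_cmult)
  have ibp1: "ip phi chi + ip psi phi2 = psi 1 * cnj (chi 1) - psi 0 * cnj (chi 0)"
    using ibp[OF W1 W2] psi chi unfolding ip_def by (simp add: L2_ip_integrable)
  have bc1': "psi 1 = E * (psi 0 - \<i> * a) - \<i> * b" using bc1 unfolding a_def b_def by (simp add: algebra_simps)
  have bc2': "cnj (chi 1) = cnj E * (cnj (chi 0) + \<i> * cnj c) + \<i> * cnj d"
  proof -
    have "chi 1 = E * (chi 0 - \<i> * c) - \<i> * d" using bc2 unfolding c_def d_def by (simp add: algebra_simps)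
    then show ?thesis by simp
  qed
  have "ip g chi - ip psi h = \<i> * (ip phi chi + ip psi phi2) + X1 * cnj c + Y1 * cnj d - cnj X2 * a - cnj Y2 * b"
    unfolding lhs rhs by (simp add: algebra_simps)
  also have "\<dots> = 0"
    unfolding ibp1 X1_def Y1_def X2_def Y2_def
    using hE by (simp add: bc1' bc2' algebra_simps) algebra
  finally show ?thesis by simp
qed


definition Kf :: "complex \<Rightarrow> (real \<Rightarrow> complex) \<Rightarrow> real \<Rightarrow> complex" where
  "Kf z h x = (LINT t|lebesgue_on {0..x}. exp (\<i> * z * of_real t) * h t)"

definition Cf :: "complex \<Rightarrow> (real \<Rightarrow> complex) \<Rightarrow> complex" where
  "Cf z h = Kf z h 1"

lemma expm1: "exp (- a) * exp a = (1::complex)"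
  by (metis exp_minus_inverse mult.commute)

lemma expm2: "exp a * exp (- a) = (1::complex)"
  by (rule exp_minus_inverse)

lemma exp_lin_deriv:
  fixes c :: complex
  shows "((\<lambda>x::real. exp (c * of_real x)) has_vector_derivative (c * exp (c * of_real a))) (at a within s)"
proof -
  have "((\<lambda>u. exp (c * u)) has_field_derivative (c * exp (c * of_real a))) (at (of_real a))"
    by (auto intro!: derivative_eq_intros simp: mult.commute)
  then show ?thesis by (rule has_vector_derivative_real_field)
qed

lemma exp_lin_W21: fixes c :: complex shows "W21 (\<lambda>x. exp (c * of_real x)) (\<lambda>x. c * exp (c * of_real x))"
  by (rule W21_C1[OF exp_lin_deriv]) (intro continuous_intros)

lemma exp_lin_cont: fixes c :: complex shows "continuous_on S (\<lambda>x::real. exp (c * of_real x))"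
  by (intro continuous_intros)

lemma L2_exp_mult: "L2 h \<Longrightarrow> L2 (\<lambda>t. exp (c * of_real t) * h t)"
  by (rule L2_mult_cont[OF _ exp_lin_cont])

lemma norm_exp_i: "cmod (exp (\<i> * of_real a)) = 1"
  by simp

lemma exp_ne:
  assumes "Im z \<noteq> 0"
  shows "1 - exp (\<i> * of_real \<alpha>) * exp (\<i> * z) \<noteq> 0"
proof
  assume h: "1 - exp (\<i> * of_real \<alpha>) * exp (\<i> * z) = 0"
  have "exp (\<i> * of_real \<alpha>) * exp (\<i> * z) = 1" using h by (metis eq_iff_diff_eq_0)
  then have "cmod (exp (\<i> * of_real \<alpha>) * exp (\<i> * z)) = 1" by simp
  moreover have "cmod (exp (\<i> * of_real \<alpha>) * exp (\<i> * z)) = exp (- Im z)"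
    by (simp only: norm_mult norm_exp_eq_Re) simp
  ultimately have "exp (- Im z) = 1" by simp
  then show False using assms by simp
qed

lemma beta_rel:
  assumes "Im z \<noteq> 0"
  shows "beta \<alpha> z * (1 - exp (\<i> * of_real \<alpha>) * exp (\<i> * z)) = \<i>"
proof -
  define e where "e = exp (\<i> * of_real \<alpha>)"
  define w where "w = exp (\<i> * z)"
  have ne: "1 - e * w \<noteq> 0" using exp_ne[OF assms] unfolding e_def w_def .
  have w0: "w \<noteq> 0" unfolding w_def by simp
  have emi: "exp (- \<i> * z) = inverse w" unfolding w_def by (simp add: exp_minus[symmetric])
  have ne2: "inverse w - e \<noteq> 0"
  proof
    assume "inverse w - e = 0"
    then have "1 - e * w = 0" using w0 by (simp add: field_simps)
    then show False using ne by simp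
  qed
  have "beta \<alpha> z = \<i> * inverse w / (inverse w - e)"
    unfolding beta_def emi e_def by simp
  then show ?thesis unfolding e_def[symmetric] w_def[symmetric]
    using ne ne2 w0 by (simp add: field_simps)
qed

lemma gfree_split:
  "gfree \<alpha> z x y = exp (- \<i> * z * of_real x) * (exp (\<i> * z * of_real y) * (- \<i> * heaviside (x - y) + beta \<alpha> z))"
proof -
  have "exp (- \<i> * z * of_real (x - y)) = exp (- \<i> * z * of_real x) * exp (\<i> * z * of_real y)"
    by (simp add: exp_add[symmetric] algebra_simps)
  then show ?thesis unfolding gfree_def by (simp add: mult.assoc)
qed

lemma Ev_formula:
  assumes h: "L2 h" and x: "x \<in> {0..1}"
  shows "Ev \<alpha> z h x = exp (- \<i> * z * of_real x) * (- \<i> * Kf z h x + beta \<alpha> z * Cf z h)"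
proof -
  define k where "k t = exp (\<i> * z * of_real t) * h t" for t
  have kL: "L2 k" unfolding k_def using h by (rule L2_exp_mult)
  have ki: "integrable M01 k" using kL by (rule L2_integrable)
  have [measurable]: "k \<in> borel_measurable M01" using ki by auto
  have hv: "(\<lambda>y. heaviside (x - y) * k y) \<in> borel_measurable M01"
    unfolding heaviside_def by measurable
  have ih: "integrable M01 (\<lambda>y. heaviside (x - y) * k y)"
    by (rule Bochner_Integration.integrable_bound[OF ki hv]) (auto simp: heaviside_def norm_mult)
  have "Ev \<alpha> z h x = (LINT y|M01. exp (- \<i> * z * of_real x) * ((- \<i>) * (heaviside (x - y) * k y) + beta \<alpha> z * k y))"
    unfolding Ev_def by (rule Bochner_Integration.integral_cong) (auto simp: gfree_split k_def algebra_simps)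
  also have "\<dots> = exp (- \<i> * z * of_real x) * ((- \<i>) * (LINT y|M01. heaviside (x - y) * k y) + beta \<alpha> z * (LINT y|M01. k y))"
    using ih ki by simp
  also have "(LINT y|M01. heaviside (x - y) * k y) = (LINT y|M01. (if y \<in> {0..x} then k y else 0))"
  proof (rule integral_cong_AE)
    show "(\<lambda>y. heaviside (x - y) * k y) \<in> borel_measurable M01" by (rule hv)
    show "(\<lambda>y. if y \<in> {0..x} then k y else 0) \<in> borel_measurable M01" by measurable
    have "AE y in M01. y \<noteq> x" by (rule AE_ne_point)
    then show "AE y in M01. heaviside (x - y) * k y = (if y \<in> {0..x} then k y else 0)"
      by (rule AE_mp) (rule AE_I2, auto simp: heaviside_def)
  qed
  also have "\<dots> = Kf z h x"
    unfolding Kf_def k_def using x by (rule ind_restrict[symmetric])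
  also have "(LINT y|M01. k y) = Cf z h"
    unfolding Cf_def Kf_def k_def ..
  finally show ?thesis by simp
qed

lemma Kf_W21: "L2 h \<Longrightarrow> W21 (Kf z h) (\<lambda>t. exp (\<i> * z * of_real t) * h t)"
  unfolding Kf_def by (rule W21_ind[OF L2_exp_mult])

lemma Kf_0: "Kf z h 0 = 0"
  unfolding Kf_def using integral_point0[of 0] by simp

lemma Ev_W21:
  assumes h: "L2 h"
  shows "W21 (Ev \<alpha> z h) (\<lambda>x. - \<i> * z * Ev \<alpha> z h x - \<i> * h x)"
proof -
  have F: "W21 (\<lambda>x. exp ((- \<i> * z) * of_real x)) (\<lambda>x. (- \<i> * z) * exp ((- \<i> * z) * of_real x))"
    by (rule exp_lin_W21)
  have G: "W21 (\<lambda>x. - \<i> * Kf z h x + beta \<alpha> z * Cf z h) (\<lambda>x. - \<i> * (exp (\<i> * z * of_real x) * h x) + 0)"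
    by (intro W21_add W21_cmult Kf_W21 h W21_const)
  show ?thesis
  proof (rule W21_cong[OF W21_mult[OF F G]])
    fix x :: real assume x: "x \<in> {0..1}"
    show "Ev \<alpha> z h x = exp ((- \<i> * z) * of_real x) * (- \<i> * Kf z h x + beta \<alpha> z * Cf z h)"
      using Ev_formula[OF h x] by simp
    define E where "E = exp ((- \<i> * z) * of_real x)"
    define X where "X = exp (\<i> * z * of_real x)"
    have ee: "E * X = 1" unfolding E_def X_def using expm1[of "\<i> * z * of_real x"] by simp
    have ev: "Ev \<alpha> z h x = E * (- \<i> * Kf z h x + beta \<alpha> z * Cf z h)"
      unfolding E_def using Ev_formula[OF h x, where \<alpha>=\<alpha> and z=z] by simp
    have t2: "E * (- \<i> * (X * h x) + 0) = - \<i> * (E * X) * h x" by (simp add: algebra_simps)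
    show "- \<i> * z * Ev \<alpha> z h x - \<i> * h x =
      (- \<i> * z) * exp ((- \<i> * z) * of_real x) * (- \<i> * Kf z h x + beta \<alpha> z * Cf z h) +
      exp ((- \<i> * z) * of_real x) * (- \<i> * (exp (\<i> * z * of_real x) * h x) + 0)"
      unfolding E_def[symmetric] X_def[symmetric] t2 ee ev by (simp add: algebra_simps)
  qed
qed

lemma Ev_0: "L2 h \<Longrightarrow> Ev \<alpha> z h 0 = beta \<alpha> z * Cf z h"
  using Ev_formula[of h 0] by (simp add: Kf_0)

lemma Ev_1:
  assumes h: "L2 h" and z: "Im z \<noteq> 0"
  shows "Ev \<alpha> z h 1 = exp (\<i> * of_real \<alpha>) * beta \<alpha> z * Cf z h"
proof -
  have "Ev \<alpha> z h 1 = exp (- \<i> * z * of_real 1) * (- \<i> * Kf z h 1 + beta \<alpha> z * Cf z h)"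
    by (rule Ev_formula[OF h]) simp
  then have "Ev \<alpha> z h 1 = exp (- \<i> * z) * (- \<i> + beta \<alpha> z) * Cf z h"
    by (simp add: Cf_def algebra_simps)
  also have "exp (- \<i> * z) * (- \<i> + beta \<alpha> z) = exp (\<i> * of_real \<alpha>) * beta \<alpha> z"
  proof -
    have r: "beta \<alpha> z * (1 - exp (\<i> * of_real \<alpha>) * exp (\<i> * z)) = \<i>" by (rule beta_rel[OF z])
    have w: "exp (- \<i> * z) * exp (\<i> * z) = 1" using expm1[of "\<i> * z"] by simp
    have "exp (- \<i> * z) * (- \<i> + beta \<alpha> z) = exp (- \<i> * z) * (- beta \<alpha> z * (1 - exp (\<i> * of_real \<alpha>) * exp (\<i> * z)) + beta \<alpha> z)"
      using r by simp
    also have "\<dots> = exp (\<i> * of_real \<alpha>) * beta \<alpha> z * (exp (- \<i> * z) * exp (\<i> * z))"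
      by (simp add: algebra_simps)
    finally show ?thesis using w by simp
  qed
  finally show ?thesis by simp
qed

lemma Ev_bc: "L2 h \<Longrightarrow> Im z \<noteq> 0 \<Longrightarrow> Ev \<alpha> z h 1 = exp (\<i> * of_real \<alpha>) * Ev \<alpha> z h 0"
  using Ev_0 Ev_1 by (simp add: mult.assoc)

lemma E0_formula: "x \<in> {0..1} \<Longrightarrow> E0 \<alpha> z x = (exp (\<i> * z) * beta \<alpha> z) * exp ((- \<i> * z) * of_real x)"
  unfolding E0_def gfree_def heaviside_def by (simp add: mult_exp_exp algebra_simps)

lemma E0_W21: "W21 (E0 \<alpha> z) (\<lambda>x. - \<i> * z * E0 \<alpha> z x)"
proof (rule W21_cong[OF W21_cmult[OF exp_lin_W21]])
  fix x :: real assume x: "x \<in> {0..1}"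
  show "E0 \<alpha> z x = (exp (\<i> * z) * beta \<alpha> z) * exp ((- \<i> * z) * of_real x)" by (rule E0_formula[OF x])
  show "- \<i> * z * E0 \<alpha> z x = (exp (\<i> * z) * beta \<alpha> z) * ((- \<i> * z) * exp ((- \<i> * z) * of_real x))"
    using E0_formula[OF x] by simp
qed

lemma E0_0: "E0 \<alpha> z 0 = exp (\<i> * z) * beta \<alpha> z"
  using E0_formula[of 0] by simp

lemma E0_1: "E0 \<alpha> z 1 = beta \<alpha> z"
  using E0_formula[of 1] expm2[of "\<i> * z"] by simp


lemma Im_cnj_ne: "Im z \<noteq> 0 \<Longrightarrow> Im (cnj z) \<noteq> 0" by simp

lemma Ev_adj:
  assumes z: "Im z \<noteq> 0" and h: "L2 h" and k: "L2 k"
  shows "ip (Ev \<alpha> z h) k = ip h (Ev \<alpha> (cnj z) k)"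
proof -
  define u where "u = Ev \<alpha> z h"
  define v where "v = Ev \<alpha> (cnj z) k"
  define u' where "u' x = - \<i> * z * u x - \<i> * h x" for x
  define v' where "v' x = - \<i> * cnj z * v x - \<i> * k x" for x
  have Wu: "W21 u u'" unfolding u_def u'_def by (rule Ev_W21[OF h])
  have Wv: "W21 v v'" unfolding v_def v'_def by (rule Ev_W21[OF k])
  have uL: "L2 u" "L2 u'" using Wu by (auto intro: W21_L2 W21_L2d)
  have vL: "L2 v" "L2 v'" using Wv by (auto intro: W21_L2 W21_L2d)
  have heq: "h = (\<lambda>x. \<i> * u' x - z * u x)" by (auto simp: u'_def fun_eq_iff algebra_simps)
  have keq: "k = (\<lambda>x. \<i> * v' x - cnj z * v x)" by (auto simp: v'_def fun_eq_iff algebra_simps)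
  have bu: "u 1 = exp (\<i> * of_real \<alpha>) * u 0" unfolding u_def by (rule Ev_bc[OF h z])
  have bv: "v 1 = exp (\<i> * of_real \<alpha>) * v 0" unfolding v_def by (rule Ev_bc[OF k Im_cnj_ne[OF z]])
  have ib: "ip u' v + ip u v' = u 1 * cnj (v 1) - u 0 * cnj (v 0)"
    using ibp[OF Wu Wv] uL vL unfolding ip_def by (simp add: L2_ip_integrable)
  have E1: "exp (\<i> * of_real \<alpha>) * cnj (exp (\<i> * of_real \<alpha>)) = 1"
    by (simp add: exp_cnj expm2)
  have ib0: "ip u' v + ip u v' = 0"
    unfolding ib bu bv using E1 by (simp add: algebra_simps)
  have f1: "ip h v = \<i> * ip u' v - z * ip u v"
    unfolding heq using uL vL by (simp add: ip_diff_left ip_cmult_left L2_cmult)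
  have f2: "ip u k = - \<i> * ip u v' - z * ip u v"
    unfolding keq using uL vL by (simp add: ip_diff_right ip_cmult_right L2_cmult)
  have "ip u k - ip h v = - \<i> * (ip u' v + ip u v')" unfolding f1 f2 by (simp add: algebra_simps)
  then have "ip u k = ip h v" unfolding ib0 by simp
  then show ?thesis unfolding u_def v_def .
qed

lemma bt_rel:
  assumes z: "Im z \<noteq> 0"
  shows "cnj (beta \<alpha> (cnj z)) = exp (\<i> * of_real \<alpha>) * exp (\<i> * z) * beta \<alpha> z"
proof -
  define e where "e = exp (\<i> * of_real \<alpha>)"
  define w where "w = exp (\<i> * z)"
  define b where "b = beta \<alpha> z"
  define bt where "bt = cnj (beta \<alpha> (cnj z))"
  have ne: "1 - e * w \<noteq> 0" unfolding e_def w_def by (rule exp_ne[OF z])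
  have r1: "b * (1 - e * w) = \<i>" unfolding b_def e_def w_def by (rule beta_rel[OF z])
  have r2: "beta \<alpha> (cnj z) * (1 - e * exp (\<i> * cnj z)) = \<i>" unfolding e_def by (rule beta_rel[OF Im_cnj_ne[OF z]])
  have "cnj (beta \<alpha> (cnj z) * (1 - e * exp (\<i> * cnj z))) = - \<i>" using r2 by simp
  then have r3: "bt * (1 - cnj e * exp (- \<i> * z)) = - \<i>" unfolding bt_def by (simp add: exp_cnj)
  have ee: "e * cnj e = 1" unfolding e_def by (simp add: exp_cnj expm2)
  have ww: "w * exp (- \<i> * z) = 1" unfolding w_def using expm2[of "\<i> * z"] by simp
  have "bt * (1 - e * w) = bt * (1 - cnj e * exp (- \<i> * z)) * (- e * w)"
  proof -
    have "(1 - cnj e * exp (- \<i> * z)) * (- e * w) = - e * w + (e * cnj e) * (w * exp (- \<i> * z))"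
      by (simp add: algebra_simps)
    also have "\<dots> = 1 - e * w" using ee ww by simp
    finally have fact: "(1 - cnj e * exp (- \<i> * z)) * (- e * w) = 1 - e * w" .
    show ?thesis by (simp only: fact[symmetric] mult.assoc)
  qed
  also have "\<dots> = (- \<i>) * (- e * w)" by (simp only: r3)
  also have "\<dots> = (e * w) * (b * (1 - e * w))" using r1 by simp
  also have "\<dots> = (e * w * b) * (1 - e * w)" by (simp only: mult.assoc)
  finally have "bt * (1 - e * w) = (e * w * b) * (1 - e * w)" .
  then have "bt = e * w * b" using ne by simp
  then show ?thesis unfolding bt_def e_def w_def b_def .
qed

lemma ip_E0c:
  assumes v: "L2 v" and z: "Im z \<noteq> 0"
  shows "ip v (E0 \<alpha> (cnj z)) = exp (\<i> * of_real \<alpha>) * beta \<alpha> z * Cf z v"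
proof -
  define bt where "bt = cnj (beta \<alpha> (cnj z))"
  have "ip v (E0 \<alpha> (cnj z)) = (LINT y|M01. (exp (- \<i> * z) * bt) * (exp (\<i> * z * of_real y) * v y))"
    unfolding ip_def
  proof (rule Bochner_Integration.integral_cong[OF refl])
    fix y assume "y \<in> space M01"
    then have y: "y \<in> {0..1}" by simp
    have "cnj (E0 \<alpha> (cnj z) y) = exp (- \<i> * z) * bt * exp (\<i> * z * of_real y)"
      unfolding E0_formula[OF y] bt_def by (simp add: exp_cnj)
    then show "v y * cnj (E0 \<alpha> (cnj z) y) = (exp (- \<i> * z) * bt) * (exp (\<i> * z * of_real y) * v y)"
      by (simp add: algebra_simps)
  qed
  also have "\<dots> = (exp (- \<i> * z) * bt) * Cf z v"
    unfolding Cf_def Kf_def by simp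
  also have "exp (- \<i> * z) * bt = exp (\<i> * of_real \<alpha>) * beta \<alpha> z"
  proof -
    have "exp (- \<i> * z) * bt = exp (\<i> * of_real \<alpha>) * (exp (- \<i> * z) * exp (\<i> * z)) * beta \<alpha> z"
      unfolding bt_def bt_rel[OF z] by (simp add: algebra_simps)
    then show ?thesis using expm1[of "\<i> * z"] by simp
  qed
  finally show ?thesis by simp
qed

lemma ip_E0_Cf:
  assumes v: "L2 v"
  shows "ip (E0 \<alpha> z) v = beta \<alpha> z * exp (\<i> * z) * cnj (Cf (cnj z) v)"
proof -
  have "ip (E0 \<alpha> z) v = (LINT y|M01. (beta \<alpha> z * exp (\<i> * z)) * cnj (exp (\<i> * cnj z * of_real y) * v y))"
    unfolding ip_def
  proof (rule Bochner_Integration.integral_cong[OF refl])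
    fix y assume "y \<in> space M01"
    then have y: "y \<in> {0..1}" by simp
    show "E0 \<alpha> z y * cnj (v y) = (beta \<alpha> z * exp (\<i> * z)) * cnj (exp (\<i> * cnj z * of_real y) * v y)"
      unfolding E0_formula[OF y] by (simp add: exp_cnj algebra_simps)
  qed
  also have "\<dots> = (beta \<alpha> z * exp (\<i> * z)) * cnj (Cf (cnj z) v)"
    unfolding Cf_def Kf_def by (simp add: Bochner_Integration.integral_cnj[symmetric] del: Bochner_Integration.integral_cnj)
  finally show ?thesis .
qed

lemma Ev_L2: "L2 h \<Longrightarrow> L2 (Ev \<alpha> z h)"
  by (rule W21_L2[OF Ev_W21])

lemma Ev_cont: "L2 h \<Longrightarrow> continuous_on {0..1} (Ev \<alpha> z h)"
  by (rule W21_cont[OF Ev_W21])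

lemma E0_L2: "L2 (E0 \<alpha> z)"
  by (rule W21_L2[OF E0_W21])

lemma E0_cont: "continuous_on {0..1} (E0 \<alpha> z)"
  by (rule W21_cont[OF E0_W21])

lemma Ev_zero: "Ev \<alpha> z (\<lambda>x. 0) = (\<lambda>x. 0)"
  unfolding Ev_def by simp


lemma lin1: "(c::complex) + p - q = 0 \<Longrightarrow> p - q = - c"
  by (metis add_diff_eq add_eq_0_iff)

lemma lin2: "(c::complex) + p + q = 0 \<Longrightarrow> p + q = - c"
  by (metis add.assoc add_eq_0_iff)

lemma alg_cE1_bc:
  fixes E W B C x0 x1 :: complex
  assumes "x0 = B * C - 2 * \<i> * E * W * B" "x1 = E * B * C - 2 * \<i> * E * B" "B * (1 - E * W) = \<i>"
  shows "x1 - E * x0 = 2 * E"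
proof -
  have "x1 - E * x0 = - 2 * \<i> * E * (B * (1 - E * W))" unfolding assms(1,2) by (simp add: algebra_simps)
  then show ?thesis unfolding assms(3) by simp
qed
lemma alg_cE2_bc:
  fixes E W B C x0 x1 :: complex
  assumes "x0 = B * C + 2 * \<i> * W * B" "x1 = E * B * C + 2 * \<i> * B" "B * (1 - E * W) = \<i>"
  shows "x1 - E * x0 = - 2"
proof -
  have "x1 - E * x0 = 2 * \<i> * (B * (1 - E * W))" unfolding assms(1,2) by (simp add: algebra_simps)
  then show ?thesis unfolding assms(3) by simp
qed
lemma alg_graph_bc:
  fixes E p0 p1 c1 c2 P Q :: complex
  assumes "p1 - E * p0 = 2 * E * c1 - 2 * c2" "p0 - \<i>/2 * P = - c1" "p1 + \<i>/2 * Q = - c2"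
  shows "p1 + \<i> * Q = E * (p0 - \<i> * P)"
proof -
  have c1: "c1 = - (p0 - \<i>/2 * P)" using assms(2) by simp
  have c2: "c2 = - (p1 + \<i>/2 * Q)" using assms(3) by simp
  show ?thesis using assms(1) unfolding c1 c2 by (simp add: algebra_simps)
qed

locale RS =
  fixes \<alpha> :: real and v1 v2 :: "real \<Rightarrow> complex" and z :: complex
  assumes v1: "L2 v1" and v2: "L2 v2" and z: "Im z \<noteq> 0"
begin

abbreviation "cE1 \<equiv> calE \<alpha> v1 v2 1 z"
abbreviation "cE2 \<equiv> calE \<alpha> v1 v2 2 z"
abbreviation "ee \<equiv> exp (\<i> * of_real \<alpha>)"
abbreviation "bb \<equiv> beta \<alpha> z"
abbreviation "ww \<equiv> exp (\<i> * z)"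

lemma cE1_eq: "cE1 x = Ev \<alpha> z v1 x + (- 2 * \<i> * ee) * E0 \<alpha> z x"
  by (simp add: calE_def)

lemma cE2_eq: "cE2 x = Ev \<alpha> z v2 x + (2 * \<i>) * E0 \<alpha> z x"
  by (simp add: calE_def)

lemma cE1_W21: "W21 cE1 (\<lambda>x. - \<i> * z * cE1 x - \<i> * v1 x)"
proof (rule W21_cong[OF W21_add[OF Ev_W21[OF v1] W21_cmult[OF E0_W21]]])
  fix x :: real assume "x \<in> {0..1}"
  show "cE1 x = Ev \<alpha> z v1 x + (- 2 * \<i> * ee) * E0 \<alpha> z x" by (rule cE1_eq)
  show "- \<i> * z * cE1 x - \<i> * v1 x = (- \<i> * z * Ev \<alpha> z v1 x - \<i> * v1 x) + (- 2 * \<i> * ee) * (- \<i> * z * E0 \<alpha> z x)"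
    unfolding cE1_eq by (simp add: algebra_simps)
qed

lemma cE2_W21: "W21 cE2 (\<lambda>x. - \<i> * z * cE2 x - \<i> * v2 x)"
proof (rule W21_cong[OF W21_add[OF Ev_W21[OF v2] W21_cmult[OF E0_W21]]])
  fix x :: real assume "x \<in> {0..1}"
  show "cE2 x = Ev \<alpha> z v2 x + (2 * \<i>) * E0 \<alpha> z x" by (rule cE2_eq)
  show "- \<i> * z * cE2 x - \<i> * v2 x = (- \<i> * z * Ev \<alpha> z v2 x - \<i> * v2 x) + (2 * \<i>) * (- \<i> * z * E0 \<alpha> z x)"
    unfolding cE2_eq by (simp add: algebra_simps)
qed

lemma cE1_L2: "L2 cE1"
  by (rule W21_L2[OF cE1_W21])

lemma cE2_L2: "L2 cE2"
  by (rule W21_L2[OF cE2_W21])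

definition psi :: "(real \<Rightarrow> complex) \<Rightarrow> complex \<Rightarrow> complex \<Rightarrow> real \<Rightarrow> complex" where
  "psi f c1 c2 = (\<lambda>x. (Ev \<alpha> z f x + c1 * cE1 x) + c2 * cE2 x)"

lemma psi_W21:
  assumes f: "L2 f"
  shows "W21 (psi f c1 c2) (\<lambda>x. - \<i> * z * psi f c1 c2 x - \<i> * (f x + c1 * v1 x + c2 * v2 x))"
proof (rule W21_cong[OF W21_add[OF W21_add[OF Ev_W21[OF f] W21_cmult[OF cE1_W21]] W21_cmult[OF cE2_W21]]])
  fix x :: real assume "x \<in> {0..1}"
  show "psi f c1 c2 x = Ev \<alpha> z f x + c1 * cE1 x + c2 * cE2 x" by (simp add: psi_def)
  show "- \<i> * z * psi f c1 c2 x - \<i> * (f x + c1 * v1 x + c2 * v2 x) =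
    (- \<i> * z * Ev \<alpha> z f x - \<i> * f x) + c1 * (- \<i> * z * cE1 x - \<i> * v1 x) + c2 * (- \<i> * z * cE2 x - \<i> * v2 x)"
    by (simp add: psi_def algebra_simps)
qed

lemma psi_L2: "L2 f \<Longrightarrow> L2 (psi f c1 c2)"
  by (rule W21_L2[OF psi_W21])

lemma ee_cnj: "ee * cnj ee = 1"
  by (simp add: exp_cnj expm2)

lemma brel: "bb * (1 - ee * ww) = \<i>"
  by (rule beta_rel[OF z])

lemma cE1_0: "cE1 0 = bb * Cf z v1 - 2 * \<i> * ee * ww * bb"
  unfolding cE1_eq by (simp add: Ev_0[OF v1] E0_0)
lemma cE1_1: "cE1 1 = ee * bb * Cf z v1 - 2 * \<i> * ee * bb"
  unfolding cE1_eq by (simp add: Ev_1[OF v1 z] E0_1)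
lemma cE2_0: "cE2 0 = bb * Cf z v2 + 2 * \<i> * ww * bb"
  unfolding cE2_eq by (simp add: Ev_0[OF v2] E0_0)
lemma cE2_1: "cE2 1 = ee * bb * Cf z v2 + 2 * \<i> * bb"
  unfolding cE2_eq by (simp add: Ev_1[OF v2 z] E0_1)

lemma cE1_bc: "cE1 1 - ee * cE1 0 = 2 * ee"
  by (rule alg_cE1_bc[OF cE1_0 cE1_1 brel])

lemma cE2_bc: "cE2 1 - ee * cE2 0 = - 2"
  by (rule alg_cE2_bc[OF cE2_0 cE2_1 brel])

lemma psi_bc_split:
  "psi f c1 c2 1 - ee * psi f c1 c2 0 = (Ev \<alpha> z f 1 - ee * Ev \<alpha> z f 0) + c1 * (cE1 1 - ee * cE1 0) + c2 * (cE2 1 - ee * cE2 0)"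
  unfolding psi_def by (simp add: algebra_simps)

lemma psi_bc_diff:
  assumes f: "L2 f"
  shows "psi f c1 c2 1 - ee * psi f c1 c2 0 = 2 * ee * c1 - 2 * c2"
  unfolding psi_bc_split cE1_bc cE2_bc Ev_bc[OF f z] by simp

lemma psi_graph:
  assumes f: "L2 f"
    and C1: "c1 + psi f c1 c2 0 - \<i>/2 * ip (psi f c1 c2) v1 = 0"
    and C2: "c2 + psi f c1 c2 1 + \<i>/2 * ip (psi f c1 c2) v2 = 0"
  shows "(psi f c1 c2, \<lambda>x. z * psi f c1 c2 x + f x) \<in> Agraph v1 v2 \<alpha>"
proof (rule AgraphI[OF psi_W21[OF f]])
  have a: "psi f c1 c2 0 - \<i>/2 * ip (psi f c1 c2) v1 = - c1" using C1 by (rule lin1)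
  have b: "psi f c1 c2 1 + \<i>/2 * ip (psi f c1 c2) v2 = - c2" using C2 by (rule lin2)
  show "psi f c1 c2 1 + \<i> * ip (psi f c1 c2) v2 = ee * (psi f c1 c2 0 - \<i> * ip (psi f c1 c2) v1)"
    by (rule alg_graph_bc[OF psi_bc_diff[OF f] a b])
  fix x
  have a: "psi f c1 c2 0 - \<i>/2 * ip (psi f c1 c2) v1 = - c1" using C1 by (rule lin1)
  have b: "psi f c1 c2 1 + \<i>/2 * ip (psi f c1 c2) v2 = - c2" using C2 by (rule lin2)
  show "z * psi f c1 c2 x + f x = \<i> * (- \<i> * z * psi f c1 c2 x - \<i> * (f x + c1 * v1 x + c2 * v2 x)) +
          v1 x * (psi f c1 c2 0 - \<i> / 2 * ip (psi f c1 c2) v1) + v2 x * (psi f c1 c2 1 + \<i> / 2 * ip (psi f c1 c2) v2)"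
    unfolding a b by (simp add: algebra_simps)
qed

definition "B11 = cE1 0 - \<i>/2 * ip cE1 v1"
definition "B12 = cE2 0 - \<i>/2 * ip cE2 v1"
definition "B21 = cE1 1 + \<i>/2 * ip cE1 v2"
definition "B22 = cE2 1 + \<i>/2 * ip cE2 v2"
definition "r1 f = Ev \<alpha> z f 0 - \<i>/2 * ip (Ev \<alpha> z f) v1"
definition "r2 f = Ev \<alpha> z f 1 + \<i>/2 * ip (Ev \<alpha> z f) v2"

lemma ip_psi:
  assumes f: "L2 f" and v: "L2 v"
  shows "ip (psi f c1 c2) v = ip (Ev \<alpha> z f) v + c1 * ip cE1 v + c2 * ip cE2 v"
  unfolding psi_def using f v cE1_L2 cE2_L2
  by (simp add: ip_add_left ip_cmult_left L2_add L2_cmult Ev_L2)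

lemma cond1_affine:
  assumes f: "L2 f"
  shows "c1 + psi f c1 c2 0 - \<i>/2 * ip (psi f c1 c2) v1 = r1 f + (1 + B11) * c1 + B12 * c2"
  unfolding ip_psi[OF f v1] r1_def B11_def B12_def by (simp add: psi_def algebra_simps)

lemma cond2_affine:
  assumes f: "L2 f"
  shows "c2 + psi f c1 c2 1 + \<i>/2 * ip (psi f c1 c2) v2 = r2 f + B21 * c1 + (1 + B22) * c2"
  unfolding ip_psi[OF f v2] r2_def B21_def B22_def by (simp add: psi_def algebra_simps)

end


lemma alg_g11:
  fixes g b e X2 Y2 C2 M22 B22 :: complex
  assumes "g = - 2 * \<i> * (1 + 2 * \<i> * b - X2 + Y2 + \<i>/2 * M22)" "Y2 = e * b * C2"
    "B22 = (e * b * C2 + 2 * \<i> * b) + \<i>/2 * (M22 + 2 * \<i> * X2)"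
  shows "g = - 2 * \<i> * (1 + B22)"
  unfolding assms by (simp add: algebra_simps)

lemma alg_g12:
  fixes g b e eam w X1 Y2 C2 M21 B12 :: complex
  assumes "g = - 2 * \<i> * (2 * \<i> * w * b + X1 + eam * Y2 - \<i>/2 * M21)" "Y2 = e * b * C2" "eam * e = 1"
    "B12 = (b * C2 + 2 * \<i> * w * b) - \<i>/2 * (M21 + 2 * \<i> * X1)"
  shows "g = - 2 * \<i> * B12"
proof -
  have "eam * Y2 = b * C2" unfolding assms(2) using assms(3) by (metis mult.assoc mult.left_neutral)
  then show ?thesis unfolding assms(1,4) by (simp add: algebra_simps)
qed

lemma alg_g21:
  fixes g b e X2 Y1 C1 M12 B21 :: complex
  assumes "g = 2 * \<i> * (- 2 * \<i> * e * b + e * X2 + Y1 + \<i>/2 * M12)" "Y1 = e * b * C1"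
    "B21 = (e * b * C1 - 2 * \<i> * e * b) + \<i>/2 * (M12 + (- 2 * \<i> * e) * X2)"
  shows "g = 2 * \<i> * B21"
  unfolding assms by (simp add: algebra_simps)

lemma alg_g22:
  fixes g b e eam w X1 Y1 C1 M11 B11 :: complex
  assumes "g = 2 * \<i> * (1 - 2 * \<i> * e * w * b - e * X1 + eam * Y1 - \<i>/2 * M11)" "Y1 = e * b * C1" "eam * e = 1"
    "B11 = (b * C1 - 2 * \<i> * e * w * b) - \<i>/2 * (M11 + (- 2 * \<i> * e) * X1)"
  shows "g = 2 * \<i> * (1 + B11)"
proof -
  have "eam * Y1 = b * C1" unfolding assms(2) using assms(3) by (metis mult.assoc mult.left_neutral)
  then show ?thesis unfolding assms(1,4) by (simp add: algebra_simps)
qed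

lemma alg_d1:
  fixes d Mf1 e b Cf Yf r1 :: complex
  assumes "d = Mf1 + cnj (- 2 * \<i> * e) * Yf" "Yf = e * b * Cf" "cnj e * e = 1" "r1 = b * Cf - \<i>/2 * Mf1"
  shows "d = 2 * \<i> * r1"
proof -
  have "cnj (- 2 * \<i> * e) * Yf = 2 * \<i> * b * Cf"
    unfolding assms(2) using assms(3) by simp
  then show ?thesis unfolding assms(1,4) by (simp add: algebra_simps)
qed

lemma alg_d2:
  fixes d Mf2 e b Cf Yf r2 :: complex
  assumes "d = Mf2 + cnj (2 * \<i>) * Yf" "Yf = e * b * Cf" "r2 = e * b * Cf + \<i>/2 * Mf2"
  shows "d = - 2 * \<i> * r2"
  unfolding assms by (simp add: algebra_simps)

lemma alg_cramer:
  fixes B11 B12 B21 B22 r1 r2 d1 d2 g11 g12 g21 g22 gd c1 c2 :: complex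
  assumes g: "g11 = - 2 * \<i> * (1 + B22)" "g12 = - 2 * \<i> * B12" "g21 = 2 * \<i> * B21" "g22 = 2 * \<i> * (1 + B11)"
    and gd: "gd = g11 * g22 - g12 * g21" "gd \<noteq> 0"
    and d: "d1 = 2 * \<i> * r1" "d2 = - 2 * \<i> * r2"
    and c: "c1 = - (1 / gd) * (g11 * d1 + g12 * d2)" "c2 = - (1 / gd) * (g21 * d1 + g22 * d2)"
  shows "r1 + (1 + B11) * c1 + B12 * c2 = 0" "r2 + B21 * c1 + (1 + B22) * c2 = 0"
proof -
  define D where "D = (1 + B11) * (1 + B22) - B12 * B21"
  have gD: "gd = 4 * D" unfolding gd g D_def by (simp add: algebra_simps)
  then have D0: "D \<noteq> 0" using gd(2) by auto
  have c1': "c1 = - ((1 + B22) * r1 - B12 * r2) / D"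
    unfolding c(1) gD g d using D0 by (simp add: field_simps)
  have c2': "c2 = - ((1 + B11) * r2 - B21 * r1) / D"
    unfolding c(2) gD g d using D0 by (simp add: field_simps)
  show "r1 + (1 + B11) * c1 + B12 * c2 = 0"
    unfolding c1' c2' using D0 by (simp add: field_simps D_def)
  show "r2 + B21 * c1 + (1 + B22) * c2 = 0"
    unfolding c1' c2' using D0 by (simp add: field_simps D_def)
qed

lemma alg_gdet:
  fixes B11 B12 B21 B22 g11 g12 g21 g22 :: complex
  assumes g: "g11 = - 2 * \<i> * (1 + B22)" "g12 = - 2 * \<i> * B12" "g21 = 2 * \<i> * B21" "g22 = 2 * \<i> * (1 + B11)"
  shows "g11 * g22 - g12 * g21 = 4 * ((1 + B11) * (1 + B22) - B12 * B21)"
  unfolding g by (simp add: algebra_simps)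
lemma alg_kernel:
  fixes a b c d :: complex
  assumes "a * d - b * c = 0"
  shows "\<exists>x y. (x, y) \<noteq> (0, 0) \<and> a * x + b * y = 0 \<and> c * x + d * y = 0"
proof (cases "(a, b) = (0, 0)")
  case False
  then show ?thesis using assms
    by (intro exI[of _ b] exI[of _ "- a"]) (auto simp: algebra_simps)
next
  case ab: True
  show ?thesis
  proof (cases "(c, d) = (0, 0)")
    case True
    then show ?thesis using ab by (intro exI[of _ 1] exI[of _ 0]) auto
  next
    case False
    then show ?thesis using assms ab
      by (intro exI[of _ d] exI[of _ "- c"]) (auto simp: algebra_simps)
  qed
qed

lemma calE_L2:
  assumes v: "L2 v1" "L2 v2"
  shows "L2 (calE \<alpha> v1 v2 k w)"
proof (cases "k = 1")
  case True
  then have e: "calE \<alpha> v1 v2 k w = (\<lambda>x. Ev \<alpha> w v1 x + (- 2 * \<i> * exp (\<i> * of_real \<alpha>)) * E0 \<alpha> w x)"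
    by (auto simp: calE_def fun_eq_iff)
  show ?thesis unfolding e by (rule L2_add[OF Ev_L2[OF v(1)] L2_cmult[OF E0_L2]])
next
  case False
  then have e: "calE \<alpha> v1 v2 k w = (\<lambda>x. Ev \<alpha> w v2 x + (2 * \<i>) * E0 \<alpha> w x)"
    by (auto simp: calE_def fun_eq_iff)
  show ?thesis unfolding e by (rule L2_add[OF Ev_L2[OF v(2)] L2_cmult[OF E0_L2]])
qed

lemma gfree_int:
  assumes h: "L2 h"
  shows "integrable M01 (\<lambda>y. gfree \<alpha> z x y * h y)"
proof -
  define k where "k t = exp (\<i> * z * of_real t) * h t" for t
  have kL: "L2 k" unfolding k_def using h by (rule L2_exp_mult)
  have ki: "integrable M01 k" using kL by (rule L2_integrable)
  have [measurable]: "k \<in> borel_measurable M01" using ki by auto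
  have hv: "(\<lambda>y. heaviside (x - y) * k y) \<in> borel_measurable M01"
    unfolding heaviside_def by measurable
  have ih: "integrable M01 (\<lambda>y. heaviside (x - y) * k y)"
    by (rule Bochner_Integration.integrable_bound[OF ki hv]) (auto simp: heaviside_def norm_mult)
  have eq: "(\<lambda>y. gfree \<alpha> z x y * h y) = (\<lambda>y. exp (- \<i> * z * of_real x) * ((- \<i>) * (heaviside (x - y) * k y) + beta \<alpha> z * k y))"
    by (auto simp: fun_eq_iff gfree_split k_def algebra_simps)
  show ?thesis unfolding eq using ih ki by simp
qed

lemma ip_zero_left: "ip (\<lambda>x. 0) v = 0"
  unfolding ip_def by simp

context RS
begin

lemma cE1_fun: "cE1 = (\<lambda>x. Ev \<alpha> z v1 x + (- 2 * \<i> * ee) * E0 \<alpha> z x)"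
  by (rule ext) (rule cE1_eq)

lemma cE2_fun: "cE2 = (\<lambda>x. Ev \<alpha> z v2 x + (2 * \<i>) * E0 \<alpha> z x)"
  by (rule ext) (rule cE2_eq)

lemma ip_cE1: assumes v: "L2 v" shows "ip cE1 v = ip (Ev \<alpha> z v1) v + (- 2 * \<i> * ee) * ip (E0 \<alpha> z) v"
  unfolding cE1_fun ip_add_left[OF Ev_L2[OF v1] L2_cmult[OF E0_L2] v] ip_cmult_left ..

lemma ip_cE2: assumes v: "L2 v" shows "ip cE2 v = ip (Ev \<alpha> z v2) v + (2 * \<i>) * ip (E0 \<alpha> z) v"
  unfolding cE2_fun ip_add_left[OF Ev_L2[OF v2] L2_cmult[OF E0_L2] v] ip_cmult_left ..

lemma B11_eq: "B11 = (bb * Cf z v1 - 2 * \<i> * ee * ww * bb) - \<i>/2 * (ip (Ev \<alpha> z v1) v1 + (- 2 * \<i> * ee) * ip (E0 \<alpha> z) v1)"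
  unfolding B11_def cE1_0 ip_cE1[OF v1] ..

lemma B12_eq: "B12 = (bb * Cf z v2 + 2 * \<i> * ww * bb) - \<i>/2 * (ip (Ev \<alpha> z v2) v1 + 2 * \<i> * ip (E0 \<alpha> z) v1)"
  unfolding B12_def cE2_0 ip_cE2[OF v1] ..

lemma B21_eq: "B21 = (ee * bb * Cf z v1 - 2 * \<i> * ee * bb) + \<i>/2 * (ip (Ev \<alpha> z v1) v2 + (- 2 * \<i> * ee) * ip (E0 \<alpha> z) v2)"
  unfolding B21_def cE1_1 ip_cE1[OF v2] ..

lemma B22_eq: "B22 = (ee * bb * Cf z v2 + 2 * \<i> * bb) + \<i>/2 * (ip (Ev \<alpha> z v2) v2 + 2 * \<i> * ip (E0 \<alpha> z) v2)"
  unfolding B22_def cE2_1 ip_cE2[OF v2] ..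

lemma gam11_raw: "gam \<alpha> v1 v2 z 1 1 = - 2 * \<i> * (1 + 2 * \<i> * bb - ip (E0 \<alpha> z) v2 + ip v2 (E0 \<alpha> (cnj z)) + \<i>/2 * ip (Ev \<alpha> z v2) v2)"
  by (simp add: gam_def Let_def)

lemma gam12_raw: "gam \<alpha> v1 v2 z 1 2 = - 2 * \<i> * (2 * \<i> * ww * bb + ip (E0 \<alpha> z) v1 + exp (- \<i> * of_real \<alpha>) * ip v2 (E0 \<alpha> (cnj z)) - \<i>/2 * ip (Ev \<alpha> z v2) v1)"
  by (simp add: gam_def Let_def)

lemma gam21_raw: "gam \<alpha> v1 v2 z 2 1 = 2 * \<i> * (- 2 * \<i> * ee * bb + ee * ip (E0 \<alpha> z) v2 + ip v1 (E0 \<alpha> (cnj z)) + \<i>/2 * ip (Ev \<alpha> z v1) v2)"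
  by (simp add: gam_def Let_def)

lemma gam22_raw: "gam \<alpha> v1 v2 z 2 2 = 2 * \<i> * (1 - 2 * \<i> * ee * ww * bb - ee * ip (E0 \<alpha> z) v1 + exp (- \<i> * of_real \<alpha>) * ip v1 (E0 \<alpha> (cnj z)) - \<i>/2 * ip (Ev \<alpha> z v1) v1)"
  by (simp add: gam_def Let_def)

lemma eam_ee: "exp (- \<i> * of_real \<alpha>) * ee = 1"
  using expm1[of "\<i> * of_real \<alpha>"] by simp

lemma gam11: "gam \<alpha> v1 v2 z 1 1 = - 2 * \<i> * (1 + B22)"
  by (rule alg_g11[OF gam11_raw ip_E0c[OF v2 z] B22_eq])

lemma gam12: "gam \<alpha> v1 v2 z 1 2 = - 2 * \<i> * B12"
  by (rule alg_g12[OF gam12_raw ip_E0c[OF v2 z] eam_ee B12_eq])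

lemma gam21: "gam \<alpha> v1 v2 z 2 1 = 2 * \<i> * B21"
  by (rule alg_g21[OF gam21_raw ip_E0c[OF v1 z] B21_eq])

lemma gam22: "gam \<alpha> v1 v2 z 2 2 = 2 * \<i> * (1 + B11)"
  by (rule alg_g22[OF gam22_raw ip_E0c[OF v1 z] eam_ee B11_eq])

lemma gdet_B: "gdet \<alpha> v1 v2 z = 4 * ((1 + B11) * (1 + B22) - B12 * B21)"
  unfolding gdet_def by (rule alg_gdet[OF gam11 gam12 gam21 gam22])

definition "dd1 f = ip f (calE \<alpha> v1 v2 1 (cnj z))"
definition "dd2 f = ip f (calE \<alpha> v1 v2 2 (cnj z))"

lemma cnj_ee_ee: "cnj ee * ee = 1"
  using ee_cnj by (simp add: mult.commute)

lemma dd1_eq: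
  assumes f: "L2 f"
  shows "dd1 f = 2 * \<i> * r1 f"
proof (rule alg_d1[OF _ ip_E0c[OF f z] cnj_ee_ee])
  have "calE \<alpha> v1 v2 1 (cnj z) = (\<lambda>x. Ev \<alpha> (cnj z) v1 x + (- 2 * \<i> * ee) * E0 \<alpha> (cnj z) x)"
    by (auto simp: calE_def fun_eq_iff)
  then show "dd1 f = ip (Ev \<alpha> z f) v1 + cnj (- 2 * \<i> * ee) * ip f (E0 \<alpha> (cnj z))"
    unfolding dd1_def Ev_adj[OF z f v1] using f v1
    by (simp only: ip_add_right[OF f Ev_L2 L2_cmult[OF E0_L2]] ip_cmult_right)
  show "r1 f = bb * Cf z f - \<i>/2 * ip (Ev \<alpha> z f) v1"
    unfolding r1_def Ev_0[OF f] ..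
qed

lemma dd2_eq:
  assumes f: "L2 f"
  shows "dd2 f = - 2 * \<i> * r2 f"
proof (rule alg_d2[OF _ ip_E0c[OF f z]])
  have "calE \<alpha> v1 v2 2 (cnj z) = (\<lambda>x. Ev \<alpha> (cnj z) v2 x + (2 * \<i>) * E0 \<alpha> (cnj z) x)"
    by (auto simp: calE_def fun_eq_iff)
  then show "dd2 f = ip (Ev \<alpha> z f) v2 + cnj (2 * \<i>) * ip f (E0 \<alpha> (cnj z))"
    unfolding dd2_def Ev_adj[OF z f v2] using f v2
    by (simp only: ip_add_right[OF f Ev_L2 L2_cmult[OF E0_L2]] ip_cmult_right)
  show "r2 f = ee * bb * Cf z f + \<i>/2 * ip (Ev \<alpha> z f) v2"
    unfolding r2_def Ev_1[OF f z] ..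
qed

end


lemma alg_s11:
  fixes G G' b b' e w X X' Y Y' M M' :: complex
  assumes "G' = - 2 * \<i> * (1 + 2 * \<i> * b' - X' + Y' + \<i>/2 * M')"
    "G = - 2 * \<i> * (1 + 2 * \<i> * b - X + Y + \<i>/2 * M)"
    "cnj X' = Y" "cnj Y' = X" "cnj M' = M" "cnj b' = e * w * b" "b * (1 - e * w) = \<i>"
  shows "cnj G' = G"
proof -
  have "cnj G' - G = 2 * \<i> * (2 + 2 * \<i> * (b * (1 - e * w)))"
    unfolding assms(1,2) using assms(3-6) by (simp add: algebra_simps)
  then show ?thesis unfolding assms(7) by (simp add: mult.assoc)
qed

lemma alg_s12:
  fixes G G' b b' e eam w X1 Y1' X2' Y2 M12' M21 :: complex
  assumes "G' = 2 * \<i> * (- 2 * \<i> * e * b' + e * X2' + Y1' + \<i>/2 * M12')"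
    "G = - 2 * \<i> * (2 * \<i> * w * b + X1 + eam * Y2 - \<i>/2 * M21)"
    "cnj X2' = Y2" "cnj Y1' = X1" "cnj M12' = M21" "cnj b' = e * w * b" "cnj e = eam" "eam * e = 1"
  shows "cnj G' = G"
proof -
  have "cnj G' - G = - 2 * \<i> * (2 * \<i> * w * b * (eam * e - 1))"
    unfolding assms(1,2) using assms(3-7) by (simp add: algebra_simps)
  then show ?thesis unfolding assms(8) by simp
qed

lemma alg_s21:
  fixes G G' b b' e eam w w' wi X1' Y1 X2 Y2' M21' M12 :: complex
  assumes "G' = - 2 * \<i> * (2 * \<i> * w' * b' + X1' + eam * Y2' - \<i>/2 * M21')"
    "G = 2 * \<i> * (- 2 * \<i> * e * b + e * X2 + Y1 + \<i>/2 * M12)"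
    "cnj X1' = Y1" "cnj Y2' = X2" "cnj M21' = M12" "cnj b' = e * w * b" "cnj eam = e" "cnj w' = wi" "w * wi = 1"
  shows "cnj G' = G"
proof -
  have "cnj G' - G = 2 * \<i> * (- 2 * \<i> * e * b * (w * wi - 1))"
    unfolding assms(1,2) using assms(3-8) by (simp add: algebra_simps)
  then show ?thesis unfolding assms(9) by simp
qed

lemma alg_s22:
  fixes G G' b b' e eam w w' wi X1 X1' Y1 Y1' M11 M11' :: complex
  assumes "G' = 2 * \<i> * (1 - 2 * \<i> * e * w' * b' - e * X1' + eam * Y1' - \<i>/2 * M11')"
    "G = 2 * \<i> * (1 - 2 * \<i> * e * w * b - e * X1 + eam * Y1 - \<i>/2 * M11)"
    "cnj X1' = Y1" "cnj Y1' = X1" "cnj M11' = M11" "cnj b' = e * w * b" "cnj e = eam" "cnj eam = e"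
    "cnj w' = wi" "w * wi = 1" "eam * e = 1" "b * (1 - e * w) = \<i>"
  shows "cnj G' = G"
proof -
  have "cnj G' - G = - 2 * \<i> * (2 + 2 * \<i> * b * ((eam * e) * (w * wi)) - 2 * \<i> * e * w * b)"
    unfolding assms(1,2) using assms(3-9) by (simp add: algebra_simps)
  also have "\<dots> = - 2 * \<i> * (2 + 2 * \<i> * (b * (1 - e * w)))" unfolding assms(10,11) by (simp add: algebra_simps)
  finally show ?thesis unfolding assms(12) by (simp add: mult.assoc)
qed
lemma ip_self_zero_cont:
  assumes c: "continuous_on {0..1} f" and z: "ip f f = 0" and x: "x \<in> {0..1}"
  shows "f x = 0"
proof -
  have "(LINT x|M01. (cmod (f x))^2) = 0" using z ip_self_real[of f] by simp
  moreover have "continuous_on {0..1} (\<lambda>x. (cmod (f x))^2)" by (intro continuous_intros c)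
  ultimately have "\<forall>x\<in>{0..1}. (cmod (f x))^2 = 0"
    using integralL_eq_0_iff[of 0 1 "\<lambda>x. (cmod (f x))^2"] by simp
  then show ?thesis using x by simp
qed

context RS
begin

lemma gdet_ne: "gdet \<alpha> v1 v2 z \<noteq> 0"
proof
  assume g0: "gdet \<alpha> v1 v2 z = 0"
  then have det0: "(1 + B11) * (1 + B22) - B12 * B21 = 0" using gdet_B by simp
  obtain c1 c2 where nz: "(c1, c2) \<noteq> (0, 0)" and e1: "(1 + B11) * c1 + B12 * c2 = 0"
    and e2: "B21 * c1 + (1 + B22) * c2 = 0"
    using alg_kernel[OF det0] by blast
  define p where "p = psi (\<lambda>x. 0) c1 c2"
  have r0: "r1 (\<lambda>x. 0) = 0" "r2 (\<lambda>x. 0) = 0" by (simp_all add: r1_def r2_def Ev_zero ip_zero_left)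
  have C1: "c1 + p 0 - \<i>/2 * ip p v1 = 0"
    unfolding p_def cond1_affine[OF L2_zero] r0 using e1 by simp
  have C2: "c2 + p 1 + \<i>/2 * ip p v2 = 0"
    unfolding p_def cond2_affine[OF L2_zero] r0 using e2 by simp
  have G: "(p, \<lambda>x. z * p x + 0) \<in> Agraph v1 v2 \<alpha>"
    unfolding p_def by (rule psi_graph[OF L2_zero C1[unfolded p_def] C2[unfolded p_def]])
  have "ip (\<lambda>x. z * p x + 0) p = ip p (\<lambda>x. z * p x + 0)" by (rule Agraph_sym[OF v1 v2 G G])
  then have "z * ip p p = cnj z * ip p p" by (simp add: ip_cmult_left ip_cmult_right)
  then have "(z - cnj z) * ip p p = 0" by (simp add: algebra_simps)
  moreover have "z - cnj z \<noteq> 0" using z by (auto simp: complex_eq_iff)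
  ultimately have pp: "ip p p = 0" by simp
  have pc: "continuous_on {0..1} p" unfolding p_def by (rule W21_cont[OF psi_W21[OF L2_zero]])
  have p0: "\<And>x. x \<in> {0..1} \<Longrightarrow> p x = 0" by (rule ip_self_zero_cont[OF pc pp])
  have "ip p v1 = ip (\<lambda>x. 0) v1" by (rule ip_cong_left) (simp add: p0)
  then have i1: "ip p v1 = 0" by (simp add: ip_zero_left)
  have "ip p v2 = ip (\<lambda>x. 0) v2" by (rule ip_cong_left) (simp add: p0)
  then have i2: "ip p v2 = 0" by (simp add: ip_zero_left)
  have "c1 = 0" using C1 i1 p0[of 0] by simp
  moreover have "c2 = 0" using C2 i2 p0[of 1] by simp
  ultimately show False using nz by simp
qed

definition "cc1 f = - (1 / gdet \<alpha> v1 v2 z) * (gam \<alpha> v1 v2 z 1 1 * dd1 f + gam \<alpha> v1 v2 z 1 2 * dd2 f)"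
definition "cc2 f = - (1 / gdet \<alpha> v1 v2 z) * (gam \<alpha> v1 v2 z 2 1 * dd1 f + gam \<alpha> v1 v2 z 2 2 * dd2 f)"

lemma kernel_eq:
  assumes f: "L2 f" and x: "x \<in> {0..1}"
  shows "(LINT y|M01. res_kernel \<alpha> v1 v2 z x y * f y) = psi f (cc1 f) (cc2 f) x"
proof -
  define E1' where "E1' = calE \<alpha> v1 v2 1 (cnj z)"
  define E2' where "E2' = calE \<alpha> v1 v2 2 (cnj z)"
  define G where "G = gdet \<alpha> v1 v2 z"
  define g11 where "g11 = gam \<alpha> v1 v2 z 1 1"
  define g12 where "g12 = gam \<alpha> v1 v2 z 1 2"
  define g21 where "g21 = gam \<alpha> v1 v2 z 2 1"
  define g22 where "g22 = gam \<alpha> v1 v2 z 2 2"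
  have pt: "res_kernel \<alpha> v1 v2 z x y * f y = gfree \<alpha> z x y * f y - (1 / G) * ((cE1 x * g11) * (f y * cnj (E1' y))
     + (cE1 x * g12) * (f y * cnj (E2' y)) + (cE2 x * g21) * (f y * cnj (E1' y)) + (cE2 x * g22) * (f y * cnj (E2' y)))" for y
    unfolding res_kernel_def E1'_def E2'_def G_def g11_def g12_def g21_def g22_def
    by (simp add: algebra_simps)
  have i0: "integrable M01 (\<lambda>y. gfree \<alpha> z x y * f y)" by (rule gfree_int[OF f])
  have i1: "integrable M01 (\<lambda>y. f y * cnj (E1' y))" unfolding E1'_def by (rule L2_ip_integrable[OF f calE_L2[OF v1 v2]])
  have i2: "integrable M01 (\<lambda>y. f y * cnj (E2' y))" unfolding E2'_def by (rule L2_ip_integrable[OF f calE_L2[OF v1 v2]])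
  have "(LINT y|M01. res_kernel \<alpha> v1 v2 z x y * f y) = (LINT y|M01. gfree \<alpha> z x y * f y) - (1 / G) *
     ((cE1 x * g11) * (LINT y|M01. f y * cnj (E1' y)) + (cE1 x * g12) * (LINT y|M01. f y * cnj (E2' y))
      + (cE2 x * g21) * (LINT y|M01. f y * cnj (E1' y)) + (cE2 x * g22) * (LINT y|M01. f y * cnj (E2' y)))"
    unfolding pt using i0 i1 i2 by simp
  also have "\<dots> = Ev \<alpha> z f x - (1 / G) * ((cE1 x * g11) * dd1 f + (cE1 x * g12) * dd2 f + (cE2 x * g21) * dd1 f + (cE2 x * g22) * dd2 f)"
    unfolding Ev_def dd1_def dd2_def ip_def E1'_def E2'_def ..
  also have "\<dots> = psi f (cc1 f) (cc2 f) x"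
    unfolding psi_def cc1_def cc2_def G_def g11_def g12_def g21_def g22_def by (simp add: algebra_simps)
  finally show ?thesis .
qed

lemma resolvent:
  assumes f: "L2 f"
  shows "\<exists>(p, g)\<in>Agraph v1 v2 \<alpha>. ae_eq p (\<lambda>x. LINT y|M01. res_kernel \<alpha> v1 v2 z x y * f y)
           \<and> ae_eq g (\<lambda>x. z * p x + f x)"
proof -
  have cr: "r1 f + (1 + B11) * cc1 f + B12 * cc2 f = 0" "r2 f + B21 * cc1 f + (1 + B22) * cc2 f = 0"
    using alg_cramer[OF gam11 gam12 gam21 gam22 gdet_def gdet_ne dd1_eq[OF f] dd2_eq[OF f] cc1_def cc2_def] by auto
  have C1: "cc1 f + psi f (cc1 f) (cc2 f) 0 - \<i>/2 * ip (psi f (cc1 f) (cc2 f)) v1 = 0"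
    unfolding cond1_affine[OF f] by (rule cr(1))
  have C2: "cc2 f + psi f (cc1 f) (cc2 f) 1 + \<i>/2 * ip (psi f (cc1 f) (cc2 f)) v2 = 0"
    unfolding cond2_affine[OF f] by (rule cr(2))
  have G: "(psi f (cc1 f) (cc2 f), \<lambda>x. z * psi f (cc1 f) (cc2 f) x + f x) \<in> Agraph v1 v2 \<alpha>"
    by (rule psi_graph[OF f C1 C2])
  have ae1: "ae_eq (psi f (cc1 f) (cc2 f)) (\<lambda>x. LINT y|M01. res_kernel \<alpha> v1 v2 z x y * f y)"
    unfolding ae_eq_def by (rule AE_I2) (simp add: kernel_eq[OF f])
  have ae2: "ae_eq (\<lambda>x. z * psi f (cc1 f) (cc2 f) x + f x) (\<lambda>x. z * psi f (cc1 f) (cc2 f) x + f x)"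
    unfolding ae_eq_def by simp
  show ?thesis using G ae1 ae2 by blast
qed

lemma gam_sym:
  "cnj (gam \<alpha> v1 v2 (cnj z) 1 1) = gam \<alpha> v1 v2 z 1 1"
  "cnj (gam \<alpha> v1 v2 (cnj z) 2 1) = gam \<alpha> v1 v2 z 1 2"
  "cnj (gam \<alpha> v1 v2 (cnj z) 1 2) = gam \<alpha> v1 v2 z 2 1"
  "cnj (gam \<alpha> v1 v2 (cnj z) 2 2) = gam \<alpha> v1 v2 z 2 2"
proof -
  interpret C: RS \<alpha> v1 v2 "cnj z" by unfold_locales (simp_all add: v1 v2 z)
  have cX: "cnj (ip (E0 \<alpha> (cnj z)) v) = ip v (E0 \<alpha> (cnj z))" for v by (rule ip_cnj[symmetric])
  have cY: "cnj (ip v (E0 \<alpha> z)) = ip (E0 \<alpha> z) v" for v by (rule ip_cnj[symmetric])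
  have cM: "cnj (ip (Ev \<alpha> (cnj z) va) vb) = ip (Ev \<alpha> z vb) va" if "L2 va" "L2 vb" for va vb
    using Ev_adj[OF z that(2) that(1)] ip_cnj by metis
  have cb: "cnj (beta \<alpha> (cnj z)) = ee * ww * bb" by (rule bt_rel[OF z])
  have ce: "cnj ee = exp (- \<i> * of_real \<alpha>)" by (simp add: exp_cnj)
  have ceam: "cnj (exp (- \<i> * of_real \<alpha>)) = ee" by (simp add: exp_cnj)
  have cw: "cnj (exp (\<i> * cnj z)) = exp (- \<i> * z)" by (simp add: exp_cnj)
  have wwi: "ww * exp (- \<i> * z) = 1" using expm2[of "\<i> * z"] by simp
  show "cnj (gam \<alpha> v1 v2 (cnj z) 1 1) = gam \<alpha> v1 v2 z 1 1"
    by (rule alg_s11[OF C.gam11_raw[unfolded complex_cnj_cnj] gam11_raw cX cY cM[OF v2 v2] cb brel])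
  show "cnj (gam \<alpha> v1 v2 (cnj z) 2 1) = gam \<alpha> v1 v2 z 1 2"
    by (rule alg_s12[OF C.gam21_raw[unfolded complex_cnj_cnj] gam12_raw cX cY cM[OF v1 v2] cb ce eam_ee])
  show "cnj (gam \<alpha> v1 v2 (cnj z) 1 2) = gam \<alpha> v1 v2 z 2 1"
    by (rule alg_s21[OF C.gam12_raw[unfolded complex_cnj_cnj] gam21_raw cX cY cM[OF v2 v1] cb ceam cw wwi])
  show "cnj (gam \<alpha> v1 v2 (cnj z) 2 2) = gam \<alpha> v1 v2 z 2 2"
    by (rule alg_s22[OF C.gam22_raw[unfolded complex_cnj_cnj] gam22_raw cX cY cM[OF v1 v1] cb ce ceam cw wwi eam_ee brel])
qed

lemma gdet_sym: "cnj (gdet \<alpha> v1 v2 (cnj z)) = gdet \<alpha> v1 v2 z"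
  unfolding gdet_def using gam_sym by (simp add: mult.commute)

end


definition clip :: "real \<Rightarrow> complex \<Rightarrow> complex" where
  "clip M w = (M / max M (cmod w)) *\<^sub>R w"

lemma clip_cont: assumes "M > 0" shows "continuous_on S (clip M)"
  unfolding clip_def using assms by (intro continuous_intros) auto

lemma clip_norm: assumes "M > 0" shows "cmod (clip M w) \<le> M"
proof (cases "cmod w \<le> M")
  case True
  then show ?thesis using assms by (simp add: clip_def max_def)
next
  case False
  have wn: "cmod w > 0" using False assms by linarith
  then have "cmod (clip M w) = M / cmod w * cmod w" using assms False by (simp add: clip_def max_def)
  also have "\<dots> = M" using wn by simp
  finally show ?thesis by simp
qed

lemma clip_id: "cmod w \<le> M \<Longrightarrow> M > 0 \<Longrightarrow> clip M w = w"
  by (simp add: clip_def max_def)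

lemma clip_diff: assumes "M > 0" shows "cmod (w - clip M w) \<le> cmod w"
proof (cases "cmod w \<le> M")
  case True
  then show ?thesis using assms by (simp add: clip_id)
next
  case False
  then have mx: "max M (cmod w) = cmod w" by simp
  have "w - clip M w = (1 - M / cmod w) *\<^sub>R w" unfolding clip_def mx by (simp add: algebra_simps)
  then have e: "cmod (w - clip M w) = \<bar>1 - M / cmod w\<bar> * cmod w" by simp
  have le: "\<bar>1 - M / cmod w\<bar> \<le> 1"
  proof -
    have wn: "cmod w > 0" using False assms by linarith
    have "0 < M / cmod w" using wn assms by simp
    moreover have "M / cmod w < 1" using wn False by (simp add: divide_less_eq)
    ultimately show ?thesis by simp
  qed
  show ?thesis unfolding e using le by (simp add: mult_left_le_one_le)
qed

lemma clip_meas[measurable]: "M > 0 \<Longrightarrow> f \<in> borel_measurable N \<Longrightarrow> (\<lambda>x. clip M (f x)) \<in> borel_measurable N"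
  by (rule borel_measurable_continuous_on[OF clip_cont])

lemma L2_bounded:
  assumes "f \<in> borel_measurable M01" "\<And>x. x \<in> {0..1} \<Longrightarrow> cmod (f x) \<le> K"
  shows "L2 f"
  unfolding L2_def
proof
  show "f \<in> borel_measurable M01" by fact
  show "integrable M01 (\<lambda>x. (cmod (f x))^2)"
  proof (rule integrable_bound_ab)
    show "(\<lambda>x. (cmod (f x))^2) \<in> borel_measurable M01" using assms(1) by measurable
    show "integrable M01 (\<lambda>x. K^2)" by (rule continuous_imp_integrable_real) simp
    fix x :: real assume "x \<in> {0..1}"
    then show "norm ((cmod (f x))^2) \<le> K^2" using assms(2) by (simp add: power_mono)
  qed
qed

lemma AE_not_negl:
  assumes "negligible N" shows "AE t in lebesgue_on {a..b::real}. t \<notin> N"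
proof -
  have "N \<in> null_sets lebesgue"
    using negligible_iff_null_sets[of N] assms negligible_imp_sets by auto
  then have "AE t in lebesgue. t \<notin> N" by (rule AE_not_in)
  then have "AE t in lebesgue. t \<in> {a..b} \<longrightarrow> t \<notin> N" by auto
  then show ?thesis
    by (subst AE_restrict_space_iff) auto
qed

lemma trunc_approx:
  assumes f: "L2 f" and d: "d > 0"
  shows "\<exists>M>0. (LINT x|M01. (cmod (f x - clip M (f x)))^2) < d"
proof -
  have [measurable]: "f \<in> borel_measurable M01" using f by (simp add: L2_def)
  define s where "s n x = (cmod (f x - clip (Suc n) (f x)))^2" for n x
  have lim: "(\<lambda>n. LINT x|M01. s n x) \<longlonglongrightarrow> (LINT x|M01. 0)"
  proof (rule integral_dominated_convergence[where w="\<lambda>x. (cmod (f x))^2"])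
    show "(\<lambda>x. 0::real) \<in> borel_measurable M01" by simp
    show "s n \<in> borel_measurable M01" for n unfolding s_def by measurable
    show "integrable M01 (\<lambda>x. (cmod (f x))^2)" using f by (simp add: L2_def)
    show "AE x in M01. (\<lambda>n. s n x) \<longlonglongrightarrow> 0"
    proof (rule AE_I2)
      fix x
      obtain N :: nat where N: "cmod (f x) \<le> real N" using real_arch_simple by blast
      have "eventually (\<lambda>n. s n x = 0) sequentially"
        unfolding eventually_sequentially
      proof (intro exI allI impI)
        fix n assume "N \<le> n"
        then have "cmod (f x) \<le> real (Suc n)" using N by linarith
        then show "s n x = 0" unfolding s_def by (simp add: clip_id)
      qed
      then show "(\<lambda>n. s n x) \<longlonglongrightarrow> 0" by (rule tendsto_eventually)
    qed
    show "AE x in M01. norm (s n x) \<le> (cmod (f x))^2" for n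
      unfolding s_def by (rule AE_I2) (simp add: power_mono clip_diff)
  qed
  then have "eventually (\<lambda>n. (LINT x|M01. s n x) < d) sequentially"
    using d by (simp add: order_tendstoD(2))
  then obtain n where "(LINT x|M01. s n x) < d" by (meson eventually_sequentially order_refl)
  then show ?thesis unfolding s_def by (intro exI[of _ "real (Suc n)"]) auto
qed

lemma cont_approx_clip:
  assumes f: "f \<in> borel_measurable M01" and M: "M > 0" and d: "d > 0"
  shows "\<exists>h. continuous_on {0..1} h \<and> (LINT x|M01. (cmod (clip M (f x) - h x))^2) < d"
proof -
  have "f measurable_on {0..1}" using f measurable_on_iff_borel_measurable[of "{0..1::real}" f] by simp
  then obtain N gs where N: "negligible N" and gc: "\<And>n. continuous_on UNIV (gs n)"
    and gl: "\<And>x. x \<notin> N \<Longrightarrow> (\<lambda>n. gs n x) \<longlonglongrightarrow> (if x \<in> {0..1} then f x else 0)"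
    unfolding measurable_on_def by blast
  have [measurable]: "f \<in> borel_measurable M01" by fact
  have gm[measurable]: "gs n \<in> borel_measurable M01" for n
    by (rule cont_meas_ab) (rule continuous_on_subset[OF gc], simp)
  define s where "s n x = (cmod (clip M (f x) - clip M (gs n x)))^2" for n x
  have lim: "(\<lambda>n. LINT x|M01. s n x) \<longlonglongrightarrow> (LINT x|M01. 0)"
  proof (rule integral_dominated_convergence[where w="\<lambda>x. (2 * M)^2"])
    show "(\<lambda>x. 0::real) \<in> borel_measurable M01" by simp
    show "s n \<in> borel_measurable M01" for n unfolding s_def using M by measurable
    show "integrable M01 (\<lambda>x. (2 * M)^2)" by (rule continuous_imp_integrable_real) simp
    have "AE x in M01. x \<notin> N" by (rule AE_not_negl[OF N])
    then show "AE x in M01. (\<lambda>n. s n x) \<longlonglongrightarrow> 0"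
    proof (rule AE_mp, intro AE_I2 impI)
      fix x assume x: "x \<in> space M01" and xN: "x \<notin> N"
      then have "(\<lambda>n. gs n x) \<longlonglongrightarrow> f x" using gl[OF xN] by simp
      moreover have "isCont (clip M) (f x)"
        using clip_cont[OF M, of UNIV] continuous_on_eq_continuous_at by blast
      ultimately have "(\<lambda>n. clip M (gs n x)) \<longlonglongrightarrow> clip M (f x)"
        by (rule isCont_tendsto_compose[rotated])
      then have "(\<lambda>n. (cmod (clip M (f x) - clip M (gs n x)))^2) \<longlonglongrightarrow> (cmod (clip M (f x) - clip M (f x)))^2"
        by (intro tendsto_intros)
      then show "(\<lambda>n. s n x) \<longlonglongrightarrow> 0" unfolding s_def by simp
    qed
    show "AE x in M01. norm (s n x) \<le> (2 * M)^2" for n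
    proof (rule AE_I2)
      fix x
      have "cmod (clip M (f x) - clip M (gs n x)) \<le> cmod (clip M (f x)) + cmod (clip M (gs n x))"
        by (rule norm_triangle_ineq4)
      also have "\<dots> \<le> 2 * M" using clip_norm[OF M, of "f x"] clip_norm[OF M, of "gs n x"] by linarith
      finally have c: "cmod (clip M (f x) - clip M (gs n x)) \<le> 2 * M" .
      have "(cmod (clip M (f x) - clip M (gs n x)))^2 \<le> (2 * M)^2" by (rule power_mono[OF c norm_ge_zero])
      then show "norm (s n x) \<le> (2 * M)^2" unfolding s_def by simp
    qed
  qed
  then have "eventually (\<lambda>n. (LINT x|M01. s n x) < d) sequentially"
    using d by (simp add: order_tendstoD(2))
  then obtain n where n: "(LINT x|M01. s n x) < d" by (meson eventually_sequentially order_refl)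
  have "continuous_on {0..1} (\<lambda>x. clip M (gs n x))"
    by (rule continuous_on_compose2[OF clip_cont[OF M] continuous_on_subset[OF gc]]) auto
  then show ?thesis using n unfolding s_def by blast
qed

lemma sq_tri2: "(cmod (a + b))^2 \<le> 2 * (cmod a)^2 + 2 * (cmod b)^2"
proof -
  have "cmod (a + b) \<le> cmod a + cmod b" by (rule norm_triangle_ineq)
  then have "(cmod (a + b))^2 \<le> (cmod a + cmod b)^2" by (simp add: power_mono)
  also have "\<dots> \<le> 2 * (cmod a)^2 + 2 * (cmod b)^2"
    using sq_bound3[of "cmod a" "cmod b"] by (simp add: power2_eq_square algebra_simps)
  finally show ?thesis .
qed

lemma cont_approx:
  assumes f: "L2 f" and d: "d > 0"
  shows "\<exists>h. continuous_on {0..1} h \<and> (LINT x|M01. (cmod (f x - h x))^2) < d"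
proof -
  have fm[measurable]: "f \<in> borel_measurable M01" using f by (simp add: L2_def)
  obtain M where M: "M > 0" and M1: "(LINT x|M01. (cmod (f x - clip M (f x)))^2) < d/4"
    using trunc_approx[OF f, of "d/4"] d by auto
  obtain h where hc: "continuous_on {0..1} h" and h1: "(LINT x|M01. (cmod (clip M (f x) - h x))^2) < d/4"
    using cont_approx_clip[OF fm M, of "d/4"] d by auto
  have cL: "L2 (\<lambda>x. clip M (f x))" by (rule L2_bounded[where K=M]) (use M clip_norm in auto)
  have i1: "integrable M01 (\<lambda>x. (cmod (f x - clip M (f x)))^2)"
    using L2_diff[OF f cL] by (simp add: L2_def)
  have i2: "integrable M01 (\<lambda>x. (cmod (clip M (f x) - h x))^2)"
    using L2_diff[OF cL cont_L2[OF hc]] by (simp add: L2_def)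
  have i3: "integrable M01 (\<lambda>x. (cmod (f x - h x))^2)"
    using L2_diff[OF f cont_L2[OF hc]] by (simp add: L2_def)
  have "(LINT x|M01. (cmod (f x - h x))^2) \<le> (LINT x|M01. 2 * (cmod (f x - clip M (f x)))^2 + 2 * (cmod (clip M (f x) - h x))^2)"
  proof (rule integral_mono[OF i3])
    show "integrable M01 (\<lambda>x. 2 * (cmod (f x - clip M (f x)))^2 + 2 * (cmod (clip M (f x) - h x))^2)"
      using i1 i2 by simp
    fix x show "(cmod (f x - h x))^2 \<le> 2 * (cmod (f x - clip M (f x)))^2 + 2 * (cmod (clip M (f x) - h x))^2"
      using sq_tri2[of "f x - clip M (f x)" "clip M (f x) - h x"] by simp
  qed
  also have "\<dots> = 2 * (LINT x|M01. (cmod (f x - clip M (f x)))^2) + 2 * (LINT x|M01. (cmod (clip M (f x) - h x))^2)"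
    using i1 i2 by simp
  also have "\<dots> < d" using M1 h1 by simp
  finally show ?thesis using hc by blast
qed


lemma poly_approx:
  assumes h: "continuous_on {0..1} h" and d: "d > 0"
  shows "\<exists>p p'. W21 p p' \<and> (\<forall>x\<in>{0..1}. cmod (h x - p x) < d)"
proof -
  obtain p where p: "polynomial_function p" and pa: "\<forall>x\<in>{0..1}. norm (h x - p x) < d"
    using Stone_Weierstrass_polynomial_function[OF compact_Icc h d] by blast
  obtain p' where p': "polynomial_function p'" and pd: "\<And>x. (p has_vector_derivative (p' x)) (at x)"
    using has_vector_derivative_polynomial_function[OF p] by blast
  have "W21 p p'"
  proof (rule W21_C1)
    show "(p has_vector_derivative p' x) (at x within {0..1})" for x
      by (rule has_vector_derivative_at_within[OF pd])
    show "continuous_on {0..1} p'" by (rule continuous_on_polymonial_function[OF p'])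
  qed
  then show ?thesis using pa by blast
qed

definition qn :: "nat \<Rightarrow> real \<Rightarrow> complex" where "qn n x = (complex_of_real x)^n"

lemma qn_W21: "W21 (qn n) (\<lambda>x. of_nat n * (complex_of_real x)^(n - 1))"
proof (rule W21_C1)
  fix x :: real
  have "((\<lambda>u::complex. u^n) has_field_derivative (of_nat n * (complex_of_real x)^(n - 1))) (at (complex_of_real x))"
    by (rule derivative_eq_intros refl)+ simp
  then show "(qn n has_vector_derivative of_nat n * (complex_of_real x)^(n - 1)) (at x within {0..1})"
    unfolding qn_def by (rule has_vector_derivative_real_field)
next
  show "continuous_on {0..1} (\<lambda>x. of_nat n * (complex_of_real x)^(n - 1))"
    by (intro continuous_intros)
qed

lemma int_pow: "(LINT x|M01. x^k) = 1 / real (Suc k)"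
proof -
  have "((\<lambda>x. x^k) has_integral ((1::real)^(Suc k) / Suc k - 0^(Suc k) / Suc k)) {0..1}"
  proof (rule fundamental_theorem_of_calculus)
    fix x :: real
    have "((\<lambda>x. x^(Suc k)) has_real_derivative real (Suc k) * x^k) (at x)"
      using DERIV_pow[of "Suc k" x] by simp
    then have "((\<lambda>x. x^(Suc k) / real (Suc k)) has_real_derivative (real (Suc k) * x^k) / real (Suc k)) (at x)"
      by (rule DERIV_cdivide)
    then have "((\<lambda>x. x^(Suc k) / real (Suc k)) has_real_derivative x^k) (at x)" by simp
    then show "((\<lambda>x. x^(Suc k) / real (Suc k)) has_vector_derivative x^k) (at x within {0..1})"
      unfolding has_real_derivative_iff_has_vector_derivative by (rule has_vector_derivative_at_within)
  qed simp
  then have "((\<lambda>x. x^k) has_integral (1 / real (Suc k))) {0..1}" by simp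
  moreover have "integrable M01 (\<lambda>x::real. x^k)" by (rule continuous_imp_integrable_real) (intro continuous_intros)
  ultimately show ?thesis by (simp add: lebesgue_integral_eq_integral integral_unique)
qed

lemma qn_norm: "(LINT x|M01. (cmod (qn n x))^2) = 1 / real (Suc (2 * n))"
proof -
  have "(LINT x|M01. (cmod (qn n x))^2) = (LINT x|M01. x^(2 * n))"
    by (rule Bochner_Integration.integral_cong) (auto simp: qn_def norm_power power_mult[symmetric] mult.commute)
  then show ?thesis by (simp add: int_pow)
qed

lemma amgm: assumes "t > 0" shows "(a::real) * b \<le> (t * a^2 + b^2 / t) / 2"
proof -
  have "0 \<le> t * (a - b / t)^2" using assms by simp
  also have "t * (a - b / t)^2 = t * a^2 - 2 * (a * b) + b^2 / t"
    using assms by (simp add: power2_eq_square field_simps)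
  finally show ?thesis by simp
qed

lemma ip_qn_bound:
  assumes v: "L2 v" and t: "t > 0"
  shows "cmod (ip (qn n) v) \<le> (t / real (Suc (2 * n)) + (LINT x|M01. (cmod (v x))^2) / t) / 2"
proof -
  have qL: "L2 (qn n)" by (rule W21_L2[OF qn_W21])
  have i1: "integrable M01 (\<lambda>x. qn n x * cnj (v x))" by (rule L2_ip_integrable[OF qL v])
  have i2: "integrable M01 (\<lambda>x. (t * (cmod (qn n x))^2 + (cmod (v x))^2 / t) / 2)"
    using qL v by (auto simp: L2_def)
  have "cmod (ip (qn n) v) \<le> (LINT x|M01. norm (qn n x * cnj (v x)))"
    unfolding ip_def by (rule integral_norm_bound)
  also have "\<dots> \<le> (LINT x|M01. (t * (cmod (qn n x))^2 + (cmod (v x))^2 / t) / 2)"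
  proof (rule integral_mono[OF _ i2])
    show "integrable M01 (\<lambda>x. norm (qn n x * cnj (v x)))" using i1 by simp
    fix x show "norm (qn n x * cnj (v x)) \<le> (t * (cmod (qn n x))^2 + (cmod (v x))^2 / t) / 2"
      using amgm[OF t, of "cmod (qn n x)" "cmod (v x)"] by (simp add: norm_mult)
  qed
  also have "\<dots> = (t * (LINT x|M01. (cmod (qn n x))^2) + (LINT x|M01. (cmod (v x))^2) / t) / 2"
    using qL v by (simp add: L2_def)
  also have "\<dots> = (t / real (Suc (2 * n)) + (LINT x|M01. (cmod (v x))^2) / t) / 2"
    by (simp add: qn_norm)
  finally show ?thesis .
qed

lemma ip_qn_small:
  assumes v: "L2 v" and e: "e > 0"
  shows "\<exists>N. \<forall>n\<ge>N. cmod (ip (qn n) v) \<le> e"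
proof -
  define V where "V = (LINT x|M01. (cmod (v x))^2)"
  have V0: "V \<ge> 0" unfolding V_def by simp
  define t where "t = V / e + 1"
  have t: "t > 0" unfolding t_def using V0 e by (simp add: add_nonneg_pos)
  have Vt: "V / t \<le> e" unfolding t_def using V0 e by (simp add: field_simps)
  obtain N :: nat where N: "t / e \<le> real N" using real_arch_simple by blast
  show ?thesis
  proof (intro exI allI impI)
    fix n assume "N \<le> n"
    then have "t / e \<le> real (Suc (2 * n))" using N by linarith
    then have tn: "t / real (Suc (2 * n)) \<le> e" using e by (simp add: field_simps)
    have "cmod (ip (qn n) v) \<le> (t / real (Suc (2 * n)) + V / t) / 2"
      unfolding V_def by (rule ip_qn_bound[OF v t])
    also have "\<dots> \<le> e" using tn Vt by simp
    finally show "cmod (ip (qn n) v) \<le> e" .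
  qed
qed

lemma sq_tri3: "(cmod (a + b + c))^2 \<le> 3 * ((cmod a)^2 + (cmod b)^2 + (cmod c)^2)"
proof -
  have t1: "cmod (a + b + c) \<le> cmod (a + b) + cmod c" by (rule norm_triangle_ineq)
  have t2: "cmod (a + b) \<le> cmod a + cmod b" by (rule norm_triangle_ineq)
  have "cmod (a + b + c) \<le> cmod a + cmod b + cmod c" using t1 t2 by linarith
  then have "(cmod (a + b + c))^2 \<le> (cmod a + cmod b + cmod c)^2" by (simp add: power_mono)
  also have "\<dots> \<le> 3 * ((cmod a)^2 + (cmod b)^2 + (cmod c)^2)"
    using sq_bound3[of "cmod a" "cmod b"] sq_bound3[of "cmod a" "cmod c"] sq_bound3[of "cmod b" "cmod c"]
    by (simp add: power2_eq_square algebra_simps)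
  finally show ?thesis .
qed


lemma int_const01: "(LINT x|M01. (c::real)) = c"
proof -
  have "(LINT x|M01. c) = (LINT x|M01. c * x^0)" by simp
  also have "\<dots> = c * (LINT x|M01. x^0)" by (rule integral_mult_right_zero)
  also have "\<dots> = c" using int_pow[of 0] by simp
  finally show ?thesis .
qed

lemma int_sq: "L2 g \<Longrightarrow> integrable M01 (\<lambda>x. (cmod (g x))^2)"
  by (simp add: L2_def)

lemma lin3: "(A::real) < d \<Longrightarrow> B \<le> d / 2 \<Longrightarrow> C < d \<Longrightarrow> 0 < d \<Longrightarrow> 3 * (A + B + C) < 9 * d"
  by (simp add: distrib_left)

lemma density:
  assumes v1: "L2 v1" and v2: "L2 v2" and f: "L2 f" and eps: "\<epsilon> > 0"
  shows "\<exists>(psi, g)\<in>Agraph v1 v2 \<alpha>. L2norm (\<lambda>x. f x - psi x) < \<epsilon>"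
proof -
  define d where "d = \<epsilon>^2 / 9"
  have d: "d > 0" unfolding d_def using eps by simp
  obtain h where hc: "continuous_on {0..1} h" and h1: "(LINT x|M01. (cmod (f x - h x))^2) < d"
    using cont_approx[OF f d] by blast
  have sd: "sqrt (d/2) > 0" using d by simp
  obtain p p' where Wp: "W21 p p'" and pa: "\<forall>x\<in>{0..1}. cmod (h x - p x) < sqrt (d/2)"
    using poly_approx[OF hc sd] by blast
  have pL: "L2 p" by (rule W21_L2[OF Wp])
  have hL: "L2 h" by (rule cont_L2[OF hc])
  have h2: "(LINT x|M01. (cmod (h x - p x))^2) \<le> d/2"
  proof -
    have "(LINT x|M01. (cmod (h x - p x))^2) \<le> (LINT x|M01. d/2)"
    proof (rule integral_mono)
      show "integrable M01 (\<lambda>x. (cmod (h x - p x))^2)" by (rule int_sq[OF L2_diff[OF hL pL]])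
      show "integrable M01 (\<lambda>x. d/2)" by (rule continuous_imp_integrable_real) simp
      fix x assume "x \<in> space M01"
      then have "cmod (h x - p x) < sqrt (d/2)" using pa by simp
      then have "(cmod (h x - p x))^2 \<le> (sqrt (d/2))^2" by (intro power_mono) auto
      then show "(cmod (h x - p x))^2 \<le> d/2" using d by simp
    qed
    then show ?thesis using int_const01[of "d/2"] by linarith
  qed
  define e where "e = exp (\<i> * of_real \<alpha>)"
  have e1: "cmod e = 1" unfolding e_def by simp
  define ell where "ell ps = ps 1 + \<i> * ip ps v2 - e * (ps 0 - \<i> * ip ps v1)" for ps
  define Lp where "Lp = ell p"
  obtain N1 where N1: "\<forall>n\<ge>N1. cmod (ip (qn n) v1) \<le> 1/4" using ip_qn_small[OF v1, of "1/4"] by auto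
  obtain N2 where N2: "\<forall>n\<ge>N2. cmod (ip (qn n) v2) \<le> 1/4" using ip_qn_small[OF v2, of "1/4"] by auto
  obtain N3 :: nat where N3: "(4 * (cmod Lp)^2 + 1) / d \<le> real N3" using real_arch_simple by blast
  define n where "n = max (max N1 N2) (max N3 1)"
  have n1: "n \<ge> 1" and nN1: "n \<ge> N1" and nN2: "n \<ge> N2" and nN3: "n \<ge> N3" unfolding n_def by auto
  define q where "q = qn n"
  have Wq: "W21 q (\<lambda>x. of_nat n * (complex_of_real x)^(n - 1))" unfolding q_def by (rule qn_W21)
  have qL: "L2 q" by (rule W21_L2[OF Wq])
  have q0: "q 0 = 0" and q1: "q 1 = 1" unfolding q_def qn_def using n1 by auto
  have a1: "cmod (ip q v1) \<le> 1/4" using N1 nN1 unfolding q_def by auto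
  have a2: "cmod (ip q v2) \<le> 1/4" using N2 nN2 unfolding q_def by auto
  have lq: "ell q = 1 + (\<i> * ip q v2 + \<i> * e * ip q v1)" unfolding ell_def q0 q1 by (simp add: algebra_simps)
  have lqb: "cmod (ell q) \<ge> 1/2"
  proof -
    have "cmod (\<i> * ip q v2 + \<i> * e * ip q v1) \<le> cmod (\<i> * ip q v2) + cmod (\<i> * e * ip q v1)"
      by (rule norm_triangle_ineq)
    also have "\<dots> = cmod (ip q v2) + cmod (ip q v1)" by (simp add: norm_mult e1)
    finally have "cmod (\<i> * ip q v2 + \<i> * e * ip q v1) \<le> 1/2" using a1 a2 by linarith
    moreover have "1 \<le> cmod (ell q) + cmod (\<i> * ip q v2 + \<i> * e * ip q v1)"
      unfolding lq using norm_triangle_ineq4[of "1 + (\<i> * ip q v2 + \<i> * e * ip q v1)" "\<i> * ip q v2 + \<i> * e * ip q v1"]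
      by simp
    ultimately show ?thesis by linarith
  qed
  then have lq0: "ell q \<noteq> 0" by auto
  define kap where "kap = Lp / ell q"
  have kapb: "cmod kap \<le> 2 * cmod Lp"
  proof -
    have "cmod kap = cmod Lp / cmod (ell q)" unfolding kap_def by (simp add: norm_divide)
    also have "\<dots> \<le> cmod Lp / (1/2)" using lqb by (intro divide_left_mono) auto
    finally show ?thesis by simp
  qed
  define ps where "ps x = p x + (- kap) * q x" for x
  define ps' where "ps' x = p' x + (- kap) * (of_nat n * (complex_of_real x)^(n - 1))" for x
  have Wps: "W21 ps ps'" unfolding ps_def[abs_def] ps'_def[abs_def] by (rule W21_add[OF Wp W21_cmult[OF Wq]])
  have psL: "L2 ps" by (rule W21_L2[OF Wps])
  have ipps: "ip ps v = ip p v + (- kap) * ip q v" if "L2 v" for v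
  proof -
    have "ip ps v = ip p v + ip (\<lambda>x. (- kap) * q x) v"
      unfolding ps_def[abs_def] by (rule ip_add_left[OF pL L2_cmult[OF qL] that])
    then show ?thesis by (simp only: ip_cmult_left)
  qed
  have "ell ps = Lp - kap * ell q"
    unfolding ell_def Lp_def ipps[OF v1] ipps[OF v2] by (simp add: ps_def algebra_simps)
  also have "kap * ell q = Lp" unfolding kap_def using lq0 by simp
  finally have lps: "ell ps = 0" by simp
  have bc: "ps 1 + \<i> * ip ps v2 = exp (\<i> * of_real \<alpha>) * (ps 0 - \<i> * ip ps v1)"
    using lps unfolding ell_def e_def by (simp add: algebra_simps)
  define g where "g x = \<i> * ps' x + v1 x * (ps 0 - \<i>/2 * ip ps v1) + v2 x * (ps 1 + \<i>/2 * ip ps v2)" for x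
  have G: "(ps, g) \<in> Agraph v1 v2 \<alpha>" by (rule AgraphI[OF Wps bc]) (simp add: g_def)
  have kq: "(LINT x|M01. (cmod (kap * q x))^2) < d"
  proof -
    have "(LINT x|M01. (cmod (kap * q x))^2) = (cmod kap)^2 * (LINT x|M01. (cmod (q x))^2)"
      by (simp add: norm_mult power_mult_distrib)
    also have "\<dots> = (cmod kap)^2 / real (Suc (2 * n))" unfolding q_def qn_norm by simp
    also have "\<dots> \<le> (4 * (cmod Lp)^2) / real (Suc (2 * n))"
    proof (rule divide_right_mono)
      have "(cmod kap)^2 \<le> (2 * cmod Lp)^2" by (rule power_mono[OF kapb]) simp
      then show "(cmod kap)^2 \<le> 4 * (cmod Lp)^2" by simp
    qed simp
    also have "\<dots> < d"
    proof -
      have "(4 * (cmod Lp)^2 + 1) / d \<le> real (Suc (2 * n))" using N3 nN3 by linarith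
      then have "4 * (cmod Lp)^2 + 1 \<le> d * real (Suc (2 * n))" using d by (simp add: field_simps)
      then show ?thesis using d by (simp add: field_simps)
    qed
    finally show ?thesis .
  qed
  have i1: "integrable M01 (\<lambda>x. (cmod (f x - h x))^2)" by (rule int_sq[OF L2_diff[OF f hL]])
  have i2: "integrable M01 (\<lambda>x. (cmod (h x - p x))^2)" by (rule int_sq[OF L2_diff[OF hL pL]])
  have i3: "integrable M01 (\<lambda>x. (cmod (kap * q x))^2)" by (rule int_sq[OF L2_cmult[OF qL]])
  have i4: "integrable M01 (\<lambda>x. (cmod (f x - ps x))^2)" by (rule int_sq[OF L2_diff[OF f psL]])
  have "(LINT x|M01. (cmod (f x - ps x))^2) \<le>
        (LINT x|M01. 3 * ((cmod (f x - h x))^2 + (cmod (h x - p x))^2 + (cmod (kap * q x))^2))"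
  proof (rule integral_mono[OF i4])
    show "integrable M01 (\<lambda>x. 3 * ((cmod (f x - h x))^2 + (cmod (h x - p x))^2 + (cmod (kap * q x))^2))"
      using i1 i2 i3 by simp
    fix x
    have "f x - ps x = (f x - h x) + (h x - p x) + kap * q x" unfolding ps_def by (simp add: algebra_simps)
    then show "(cmod (f x - ps x))^2 \<le> 3 * ((cmod (f x - h x))^2 + (cmod (h x - p x))^2 + (cmod (kap * q x))^2)"
      using sq_tri3 by metis
  qed
  also have "\<dots> = 3 * ((LINT x|M01. (cmod (f x - h x))^2) + (LINT x|M01. (cmod (h x - p x))^2) + (LINT x|M01. (cmod (kap * q x))^2))"
    using i1 i2 i3 by simp
  also have "\<dots> < \<epsilon>^2" using lin3[OF h1 h2 kq d] unfolding d_def by simp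
  finally have "(LINT x|M01. (cmod (f x - ps x))^2) < \<epsilon>^2" .
  then have "L2norm (\<lambda>x. f x - ps x) < \<epsilon>"
    unfolding L2norm_def using eps real_sqrt_less_iff[of _ "\<epsilon>^2"] by simp
  then show ?thesis using G by blast
qed


theorem theorem5p3:
  fixes v1 v2 :: "real \<Rightarrow> complex" and \<alpha> :: real
  assumes "L2 v1" and "L2 v2" and "0 \<le> \<alpha>" and "\<alpha> < 2 * pi"
  shows "self_adjoint_graph (Agraph v1 v2 \<alpha>)
    \<and> (\<forall>z. Im z \<noteq> 0 \<longrightarrow> (\<forall>f. L2 f \<longrightarrow>
          (\<exists>(psi, g)\<in>Agraph v1 v2 \<alpha>.
             ae_eq psi (\<lambda>x. LINT y|lebesgue_on {0..1}. res_kernel \<alpha> v1 v2 z x y * f y)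
           \<and> ae_eq g (\<lambda>x. z * psi x + f x))))
    \<and> (\<forall>z. Im z \<noteq> 0 \<longrightarrow>
          (\<forall>j\<in>{1,2}. \<forall>k\<in>{1,2}. cnj (gam \<alpha> v1 v2 (cnj z) k j) = gam \<alpha> v1 v2 z j k)
        \<and> cnj (gdet \<alpha> v1 v2 (cnj z)) = gdet \<alpha> v1 v2 z
        \<and> gdet \<alpha> v1 v2 z \<noteq> 0)"
proof -
  have v1: "L2 v1" and v2: "L2 v2" by fact+
  have RSz: "RS v1 v2 z" if "Im z \<noteq> 0" for z
    using v1 v2 that by (simp add: RS_def)
  have res: "\<exists>(psi, g)\<in>Agraph v1 v2 \<alpha>.
             ae_eq psi (\<lambda>x. LINT y|lebesgue_on {0..1}. res_kernel \<alpha> v1 v2 z x y * f y)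
           \<and> ae_eq g (\<lambda>x. z * psi x + f x)" if "Im z \<noteq> 0" "L2 f" for z f
    by (rule RS.resolvent[OF RSz[OF that(1)] that(2)])
  have ran: "\<exists>(psi, g)\<in>Agraph v1 v2 \<alpha>. ae_eq g (\<lambda>x. z * psi x + f x)" if "Im z \<noteq> 0" "L2 f" for z f
    using res[OF that] by blast
  have SA: "self_adjoint_graph (Agraph v1 v2 \<alpha>)"
  proof (rule abstract_self_adjoint[where z = \<i>])
    show "ip g chi = ip psi h" if "(psi, g) \<in> Agraph v1 v2 \<alpha>" "(chi, h) \<in> Agraph v1 v2 \<alpha>" for psi g chi h
      by (rule Agraph_sym[OF v1 v2 that])
    show "L2 psi \<and> L2 g" if "(psi, g) \<in> Agraph v1 v2 \<alpha>" for psi g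
      by (rule Agraph_L2[OF v1 v2 that])
    show "\<exists>(psi, g)\<in>Agraph v1 v2 \<alpha>. ae_eq g (\<lambda>x. \<i> * psi x + f x)" if "L2 f" for f
      by (rule ran[OF _ that]) simp
    show "\<exists>(psi, g)\<in>Agraph v1 v2 \<alpha>. ae_eq g (\<lambda>x. cnj \<i> * psi x + f x)" if "L2 f" for f
      by (rule ran[OF _ that]) simp
    show "\<forall>\<epsilon>>0. \<exists>(psi, g)\<in>Agraph v1 v2 \<alpha>. L2norm (\<lambda>x. f x - psi x) < \<epsilon>" if "L2 f" for f
      using density[OF v1 v2 that] by blast
  qed
  have third: "(\<forall>j\<in>{1,2}. \<forall>k\<in>{1,2}. cnj (gam \<alpha> v1 v2 (cnj z) k j) = gam \<alpha> v1 v2 z j k)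
        \<and> cnj (gdet \<alpha> v1 v2 (cnj z)) = gdet \<alpha> v1 v2 z
        \<and> gdet \<alpha> v1 v2 z \<noteq> 0" if z: "Im z \<noteq> 0" for z
  proof -
    interpret R: RS \<alpha> v1 v2 z by (rule RSz[OF z])
    show ?thesis using R.gam_sym R.gdet_sym R.gdet_ne by auto
  qed
  show ?thesis using SA res third by blast
qed


end
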